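(* Suppose $L=cW$ with $c\in\mathbb{C}\setminus\{0\}$ and $W\in\mathbb{C}^{p\times p}$ unitary. Let $\mathcal A\in\mathbb{C}_p^{I_1\times\cdots\times I_N}$. For each $n$ let $\mathcal A_{(n)}=\mathcal U_n*\Sigma_n*\mathcal V_n^H$ be the t-SVD of the mode-$n$ unfolding, let $R_n$ be the t-rank of $\mathcal A_{(n)}$, let $\sigma^{(n)}_1,\dots,\sigma^{(n)}_{R_n}$ be the Frobenius norms of the nonzero diagonal tubal scalars $\Sigma_n(i,i)$, and fix integers $1\le I_n'\le R_n$. Define $\widehat{\mathcal U}_1,\dots,\widehat{\mathcal U}_N$ recursively: $\widehat{\mathcal U}_n\in\mathbb{C}_p^{I_n\times I_n'}$ is formed by the first $I_n'$ columns of the left unitary factor of the t-SVD of the tubal matrix $\big(\mathcal A*_1\widehat{\mathcal U}_1^H\cdots*_{n-1}\widehat{\mathcal U}_{n-1}^H\big)_{(n)}$ (for $n=1$, of $\mathcal A_{(1)}$). Let $\widehat{\mathcal S}=\mathcal A*_1\widehat{\mathcal U}_1^H\cdots*_N\widehat{\mathcal U}_N^H$ and $\widehat{\mathcal A}=\widehat{\mathcal S}*_1\widehat{\mathcal U}_1\cdots*_N\widehat{\mathcal U}_N$. Then $$\|\mathcal A-\widehat{\mathcal A}\|\le\sqrt{\sum_{n=1}^N\sum_{i=I_n'+1}^{R_n}(\sigma^{(n)}_i)^2}\le\sqrt N\,\big\|\mathcal A-\mathcal S*_1\mathcal W_1\cdots*_N\mathcal W_N\big\|$$ for every $\mathcal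 S\in\mathbb{C}_p^{I_1'\times\cdots\times I_N'}$ and all $\mathcal W_n\in\mathbb{C}_p^{I_n\times I_n'}$ with $\mathcal W_n^H*\mathcal W_n=\mathcal I_{I_n'}$.
   Context: Fix an integer $p\ge1$ and an invertible linear map $L:\mathbb{C}^p\to\mathbb{C}^p$. A tubal scalar is an element of $\mathbb{C}_p:=\mathbb{C}^p$. The tensor-tensor product of tubal scalars is $\mathbf a*\mathbf b=L^{-1}(L(\mathbf a)\odot L(\mathbf b))$, where $\odot$ is the componentwise product. A tubal matrix $\mathcal A\in\mathbb{C}_p^{I\times J}$ is an $I\times J$ array of tubal scalars; its $k$-th frontal slice $\mathcal A^{(k)}$ has entries $\mathcal A(i,j)^{(k)}$, and $L(\mathcal A)$ is obtained by applying $L$ to every entry. $(\mathcal A*\mathcal B)(i,k)=\sum_j\mathcal A(i,j)*\mathcal B(j,k)$; equivalently $L(\mathcal A*\mathcal B)^{(k)}=L(\mathcal A)^{(k)}L(\mathcal B)^{(k)}$. The identity $\mathcal I_I$ has $L(\mathcal I_I)^{(k)}$ equal to the $I\times I$ identity matrix for all $k$. The Hermitian transpose is defined by $L(\mathcal A^H)^{(k)}=(L(\mathcal A)^{(k)})^H$; $\mathcal A\in\mathbb{C}_p^{I\times I}$ is unitary if $\mathcal A*\mathcal A^H=\mathcal A^H*\mathcal A=\mathcal I_I$. A t-SVD of $\mathcal A\in\mathbb{C}_p^{I\times J}$ is the factorization $\mathcal A=\mathcal U*\Sigma*\mathcal V^H$ obtained by taking, for each $k$, a matrix SVD $L(\mathcal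 A)^{(k)}=U_kS_kV_k^H$ (with $U_k,V_k$ unitary, $S_k$ rectangular diagonal with singular values in nonincreasing order) and defining $L(\mathcal U)^{(k)}=U_k$, $L(\Sigma)^{(k)}=S_k$, $L(\mathcal V)^{(k)}=V_k$; $\mathcal U$ is its left unitary factor. The t-rank is the number of nonzero tubal scalars $\Sigma(i,i)$. A tubal tensor $\mathcal A\in\mathbb{C}_p^{I_1\times\cdots\times I_N}$ is an $N$-way array of tubal scalars; its mode-$n$ unfolding $\mathcal A_{(n)}\in\mathbb{C}_p^{I_n\times\prod_{m\neq n}I_m}$ has $\mathcal A_{(n)}(i_n,j)=\mathcal A(i_1,\dots,i_N)$ with $j=1+\sum_{k\neq n}(i_k-1)\prod_{m<k,\,m\neq n}I_m$. The $n$-mode product is $(\mathcal A*_n\mathcal U)(i_1,\dots,i_{n-1},j,i_{n+1},\dots,i_N)=\sum_{i_n}\mathcal A(i_1,\dots,i_N)*\mathcal U(j,i_n)$; repeated products are evaluated left to right. $\|\cdot\|$ is the Frobenius norm (Euclidean norm of all complex entries of the underlying array). *)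

theory Defs
  imports "HOL-Analysis.Analysis"
begin

text \<open>Tubal scalars are vectors of type complex^'p (p = CARD('p)); the transform L is a
 p x p complex matrix acting by matrix-vector multiplication. Tubal matrices of size I x J are
 functions nat => nat => tubal scalar (0-based indices, only i < I, j < J matter); tubal tensors
 are functions from index lists (0-based) to tubal scalars.\<close>

definition cadj :: "complex^'n^'m \<Rightarrow> complex^'m^'n" where
  "cadj M = (\<chi> i j. cnj (M $ j $ i))"

definition unitary_mat :: "complex^'n^'n \<Rightarrow> bool" where
  "unitary_mat W \<longleftrightarrow> W ** cadj W = mat 1 \<and> cadj W ** W = mat 1"

definition tprod :: "complex^'p^'p \<Rightarrow> complex^'p \<Rightarrow> complex^'p \<Rightarrow> complex^'p" where
  "tprod L a b = matrix_inv L *v ((L *v a) * (L *v b))"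

definition tconj :: "complex^'p^'p \<Rightarrow> complex^'p \<Rightarrow> complex^'p" where
  "tconj L a = matrix_inv L *v (\<chi> k. cnj ((L *v a) $ k))"

definition tone :: "complex^'p^'p \<Rightarrow> complex^'p" where
  "tone L = matrix_inv L *v 1"

type_synonym 'p tmat = "nat \<Rightarrow> nat \<Rightarrow> complex^('p::finite)"
type_synonym 'p ttensor = "nat list \<Rightarrow> complex^('p::finite)"

definition tmatmul :: "complex^'p^'p \<Rightarrow> nat \<Rightarrow> 'p tmat \<Rightarrow> 'p tmat \<Rightarrow> 'p tmat" where
  "tmatmul L K A B = (\<lambda>i k. \<Sum>j<K. tprod L (A i j) (B j k))"

definition tident :: "complex^'p^'p \<Rightarrow> 'p tmat" where
  "tident L = (\<lambda>i j. if i = j then tone L else 0)"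

definition tH :: "complex^'p^'p \<Rightarrow> 'p tmat \<Rightarrow> 'p tmat" where
  "tH L A = (\<lambda>i j. tconj L (A j i))"

definition slice :: "complex^'p^'p \<Rightarrow> 'p tmat \<Rightarrow> 'p \<Rightarrow> nat \<Rightarrow> nat \<Rightarrow> complex" where
  "slice L A k = (\<lambda>i j. (L *v A i j) $ k)"

definition unitary_on :: "nat \<Rightarrow> (nat \<Rightarrow> nat \<Rightarrow> complex) \<Rightarrow> bool" where
  "unitary_on n M \<longleftrightarrow>
     (\<forall>i<n. \<forall>j<n. (\<Sum>l<n. M i l * cnj (M j l)) = (if i = j then 1 else 0)) \<and>
     (\<forall>i<n. \<forall>j<n. (\<Sum>l<n. cnj (M l i) * M l j) = (if i = j then 1 else 0))"

definition is_svd :: "nat \<Rightarrow> nat \<Rightarrow> (nat \<Rightarrow> nat \<Rightarrow> complex) \<Rightarrow> (nat \<Rightarrow> nat \<Rightarrow> complex)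
    \<Rightarrow> (nat \<Rightarrow> nat \<Rightarrow> complex) \<Rightarrow> (nat \<Rightarrow> nat \<Rightarrow> complex) \<Rightarrow> bool" where
  "is_svd I J A U S V \<longleftrightarrow>
     unitary_on I U \<and> unitary_on J V \<and>
     (\<forall>i<I. \<forall>j<J. i \<noteq> j \<longrightarrow> S i j = 0) \<and>
     (\<forall>i<min I J. S i i \<in> \<real> \<and> 0 \<le> Re (S i i)) \<and>
     (\<forall>i. Suc i < min I J \<longrightarrow> Re (S (Suc i) (Suc i)) \<le> Re (S i i)) \<and>
     (\<forall>i<I. \<forall>j<J. A i j = (\<Sum>a<I. \<Sum>b<J. U i a * S a b * cnj (V j b)))"

definition tsvd :: "complex^'p^'p \<Rightarrow> nat \<Rightarrow> nat \<Rightarrow> 'p tmat \<Rightarrow> 'p tmat \<Rightarrow> 'p tmat \<Rightarrow> 'p tmat \<Rightarrow> bool" where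
  "tsvd L I J A U S V \<longleftrightarrow> (\<forall>k. is_svd I J (slice L A k) (slice L U k) (slice L S k) (slice L V k))"

definition trank :: "nat \<Rightarrow> nat \<Rightarrow> ('p::finite) tmat \<Rightarrow> nat" where
  "trank I J S = card {i. i < min I J \<and> S i i \<noteq> 0}"

definition tidx :: "nat list \<Rightarrow> nat list set" where
  "tidx dims = {is. length is = length dims \<and> (\<forall>m<length dims. is ! m < dims ! m)}"

definition tnorm :: "nat list \<Rightarrow> ('p::finite) ttensor \<Rightarrow> real" where
  "tnorm dims X = sqrt (\<Sum>is\<in>tidx dims. (norm (X is))\<^sup>2)"

text \<open>mode-n unfolding (0-based): column j encodes the other indices, lower modes fastest,
 j = sum_{k<>n} i_k * prod_{m<k, m<>n} I_m\<close>
definition unfold_idx :: "nat list \<Rightarrow> nat \<Rightarrow> nat \<Rightarrow> nat \<Rightarrow> nat list" where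
  "unfold_idx dims n i j =
     map (\<lambda>k. if k = n then i
              else (j div (\<Prod>m\<in>{m. m < k \<and> m \<noteq> n}. dims ! m)) mod (dims ! k))
         [0..<length dims]"

definition unfold_cols :: "nat list \<Rightarrow> nat \<Rightarrow> nat" where
  "unfold_cols dims n = (\<Prod>m\<in>{m. m < length dims \<and> m \<noteq> n}. dims ! m)"

definition unfold :: "nat list \<Rightarrow> nat \<Rightarrow> ('p::finite) ttensor \<Rightarrow> 'p tmat" where
  "unfold dims n A = (\<lambda>i j. A (unfold_idx dims n i j))"

text \<open>n-mode product (0-based mode n, Idim = size of mode n of A):
  (A *_n U)(.., j, ..) = sum_{r<Im} A(.., r, ..) * U(j, r)\<close>
definition nmode :: "complex^'p^'p \<Rightarrow> nat \<Rightarrow> nat \<Rightarrow> 'p ttensor \<Rightarrow> 'p tmat \<Rightarrow> 'p ttensor" where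
  "nmode L Idim n A U = (\<lambda>is. \<Sum>r<Idim. tprod L (A (is[n := r])) (U (is ! n) r))"

text \<open>A *_1 M_1 ... *_m M_m (modes 0..m-1, left to right); dims = original dimensions of A\<close>
fun mmodes :: "complex^'p^'p \<Rightarrow> nat list \<Rightarrow> 'p ttensor \<Rightarrow> (nat \<Rightarrow> 'p tmat) \<Rightarrow> nat \<Rightarrow> 'p ttensor" where
  "mmodes L dims A M 0 = A"
| "mmodes L dims A M (Suc m) = nmode L (dims ! m) m (mmodes L dims A M m) (M m)"

definition dims_after :: "nat list \<Rightarrow> nat list \<Rightarrow> nat \<Rightarrow> nat list" where
  "dims_after I I' n = map (\<lambda>k. if k < n then I' ! k else I ! k) [0..<length I]"

end

theory Submission
  imports Defs
begin



lemma cmod_sq_of_real: "complex_of_real ((cmod z)\<^sup>2) = z * cnj z"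
  by (rule complex_norm_square)

lemma sum_cmod_sq_eq:
  assumes "(\<Sum>i\<in>S. f i * cnj (f i)) = (\<Sum>i\<in>T. g i * cnj (g i))"
  shows "(\<Sum>i\<in>S. (cmod (f i))\<^sup>2) = (\<Sum>i\<in>T. (cmod (g i))\<^sup>2)"
proof -
  have "complex_of_real (\<Sum>i\<in>S. (cmod (f i))\<^sup>2) = complex_of_real (\<Sum>i\<in>T. (cmod (g i))\<^sup>2)"
    unfolding of_real_sum cmod_sq_of_real by (rule assms)
  thus ?thesis using of_real_eq_iff by blast
qed

lemma parseval_cols:
  fixes W :: "'a \<Rightarrow> 'b \<Rightarrow> complex"
  assumes S: "finite S" and T: "finite T"
    and orth: "\<And>a b. a\<in>T \<Longrightarrow> b\<in>T \<Longrightarrow> (\<Sum>i\<in>S. cnj (W i a) * W i b) = (if a = b then 1 else 0)"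
  shows "(\<Sum>i\<in>S. (cmod (\<Sum>l\<in>T. W i l * m l))\<^sup>2) = (\<Sum>l\<in>T. (cmod (m l))\<^sup>2)"
proof (rule sum_cmod_sq_eq)
  have "(\<Sum>i\<in>S. (\<Sum>l\<in>T. W i l * m l) * cnj (\<Sum>l\<in>T. W i l * m l))
      = (\<Sum>i\<in>S. \<Sum>l\<in>T. \<Sum>l'\<in>T. m l * cnj (m l') * (cnj (W i l') * W i l))"
    by (simp add: cnj_sum sum_product mult_ac)
  also have "\<dots> = (\<Sum>l\<in>T. \<Sum>l'\<in>T. m l * cnj (m l') * (\<Sum>i\<in>S. cnj (W i l') * W i l))"
    by (subst sum.swap) (simp add: sum_distrib_left sum.swap[of _ S])
  also have "\<dots> = (\<Sum>l\<in>T. \<Sum>l'\<in>T. m l * cnj (m l') * (if l' = l then 1 else 0))"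
    by (intro sum.cong refl) (simp add: orth)
  also have "\<dots> = (\<Sum>l\<in>T. m l * cnj (m l))"
    using T by (simp add: if_distrib cong: if_cong)
  finally show "(\<Sum>i\<in>S. (\<Sum>l\<in>T. W i l * m l) * cnj (\<Sum>l\<in>T. W i l * m l)) = (\<Sum>l\<in>T. m l * cnj (m l))" .
qed

lemma parseval_c:
  fixes W :: "'a \<Rightarrow> 'b \<Rightarrow> complex"
  assumes S: "finite S" and T: "finite T"
    and orth: "\<And>a b. a\<in>T \<Longrightarrow> b\<in>T \<Longrightarrow> (\<Sum>i\<in>S. cnj (W i a) * W i b) = (if a = b then 1 else 0)"
  shows "(\<Sum>i\<in>S. (\<Sum>l\<in>T. W i l * m l) * cnj (\<Sum>l\<in>T. W i l * m l)) = (\<Sum>l\<in>T. m l * cnj (m l))"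
proof -
  have "(\<Sum>i\<in>S. (\<Sum>l\<in>T. W i l * m l) * cnj (\<Sum>l\<in>T. W i l * m l))
      = (\<Sum>i\<in>S. \<Sum>l\<in>T. \<Sum>l'\<in>T. m l * cnj (m l') * (cnj (W i l') * W i l))"
    by (simp add: sum_product mult_ac)
  also have "\<dots> = (\<Sum>l\<in>T. \<Sum>l'\<in>T. m l * cnj (m l') * (\<Sum>i\<in>S. cnj (W i l') * W i l))"
    by (subst sum.swap) (simp add: sum_distrib_left sum.swap[of _ S])
  also have "\<dots> = (\<Sum>l\<in>T. \<Sum>l'\<in>T. m l * cnj (m l') * (if l' = l then 1 else 0))"
    by (intro sum.cong refl) (simp add: orth)
  also have "\<dots> = (\<Sum>l\<in>T. m l * cnj (m l))"
    using T by (simp add: if_distrib cong: if_cong)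
  finally show ?thesis .
qed

lemma cross_c:
  fixes W :: "'a \<Rightarrow> 'b \<Rightarrow> complex"
  shows "(\<Sum>i\<in>S. x i * cnj (\<Sum>l\<in>T. W i l * m l)) = (\<Sum>l\<in>T. cnj (m l) * (\<Sum>i\<in>S. cnj (W i l) * x i))"
  by (simp add: sum_distrib_left sum_distrib_right mult_ac sum.swap[of _ S])

lemma proj_identity:
  fixes W :: "'a \<Rightarrow> 'b \<Rightarrow> complex"
  assumes S: "finite S" and T: "finite T"
    and orth: "\<And>a b. a\<in>T \<Longrightarrow> b\<in>T \<Longrightarrow> (\<Sum>i\<in>S. cnj (W i a) * W i b) = (if a = b then 1 else 0)"
  shows "(\<Sum>i\<in>S. (cmod (x i - (\<Sum>l\<in>T. W i l * m l)))\<^sup>2)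
     = (\<Sum>i\<in>S. (cmod (x i))\<^sup>2) - (\<Sum>l\<in>T. (cmod (\<Sum>s\<in>S. cnj (W s l) * x s))\<^sup>2)
       + (\<Sum>l\<in>T. (cmod (m l - (\<Sum>s\<in>S. cnj (W s l) * x s)))\<^sup>2)"
proof -
  define y where "y i = (\<Sum>l\<in>T. W i l * m l)" for i
  define g where "g l = (\<Sum>s\<in>S. cnj (W s l) * x s)" for l
  have P: "(\<Sum>i\<in>S. y i * cnj (y i)) = (\<Sum>l\<in>T. m l * cnj (m l))"
    unfolding y_def by (rule parseval_c[OF S T orth])
  have C: "(\<Sum>i\<in>S. x i * cnj (y i)) = (\<Sum>l\<in>T. cnj (m l) * g l)"
    unfolding y_def g_def by (rule cross_c)
  have C2: "(\<Sum>i\<in>S. y i * cnj (x i)) = (\<Sum>l\<in>T. m l * cnj (g l))"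
  proof -
    have "(\<Sum>i\<in>S. y i * cnj (x i)) = cnj (\<Sum>i\<in>S. x i * cnj (y i))" by (simp add: mult.commute)
    also have "\<dots> = (\<Sum>l\<in>T. m l * cnj (g l))" unfolding C by (simp add: mult.commute)
    finally show ?thesis .
  qed
  have "complex_of_real ((\<Sum>i\<in>S. (cmod (x i - y i))\<^sup>2))
     = complex_of_real ((\<Sum>i\<in>S. (cmod (x i))\<^sup>2) - (\<Sum>l\<in>T. (cmod (g l))\<^sup>2)
       + (\<Sum>l\<in>T. (cmod (m l - g l))\<^sup>2))"
  proof -
    have "complex_of_real ((\<Sum>i\<in>S. (cmod (x i - y i))\<^sup>2)) = (\<Sum>i\<in>S. (x i - y i) * cnj (x i - y i))"
      unfolding of_real_sum cmod_sq_of_real ..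
    also have "\<dots> = (\<Sum>i\<in>S. x i * cnj (x i)) - (\<Sum>i\<in>S. x i * cnj (y i)) - (\<Sum>i\<in>S. y i * cnj (x i)) + (\<Sum>i\<in>S. y i * cnj (y i))"
      by (simp add: algebra_simps sum.distrib sum_subtractf)
    also have "\<dots> = (\<Sum>i\<in>S. x i * cnj (x i)) - (\<Sum>l\<in>T. g l * cnj (g l)) + (\<Sum>l\<in>T. (m l - g l) * cnj (m l - g l))"
      unfolding P C C2 by (simp add: algebra_simps sum.distrib sum_subtractf)
    also have "\<dots> = complex_of_real ((\<Sum>i\<in>S. (cmod (x i))\<^sup>2) - (\<Sum>l\<in>T. (cmod (g l))\<^sup>2)
       + (\<Sum>l\<in>T. (cmod (m l - g l))\<^sup>2))"
      unfolding of_real_add of_real_diff of_real_sum cmod_sq_of_real ..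
    finally show ?thesis .
  qed
  hence "(\<Sum>i\<in>S. (cmod (x i - y i))\<^sup>2)
     = (\<Sum>i\<in>S. (cmod (x i))\<^sup>2) - (\<Sum>l\<in>T. (cmod (g l))\<^sup>2) + (\<Sum>l\<in>T. (cmod (m l - g l))\<^sup>2)"
    using of_real_eq_iff by blast
  thus ?thesis unfolding y_def g_def .
qed

lemma bessel:
  fixes W :: "'a \<Rightarrow> 'b \<Rightarrow> complex"
  assumes S: "finite S" and T: "finite T"
    and orth: "\<And>a b. a\<in>T \<Longrightarrow> b\<in>T \<Longrightarrow> (\<Sum>i\<in>S. cnj (W i a) * W i b) = (if a = b then 1 else 0)"
  shows "(\<Sum>l\<in>T. (cmod (\<Sum>s\<in>S. cnj (W s l) * x s))\<^sup>2) \<le> (\<Sum>i\<in>S. (cmod (x i))\<^sup>2)"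
  using proj_identity[OF S T orth, of x "\<lambda>l. \<Sum>s\<in>S. cnj (W s l) * x s"]
  by (simp add: sum_nonneg) (smt (verit) sum_nonneg zero_le_power2)

lemma svd_entry:
  assumes "is_svd I J A U S V" "i < I" "j < J"
  shows "A i j = (\<Sum>a<min I J. U i a * S a a * cnj (V j a))"
proof -
  from assms have diag: "\<And>a b. a < I \<Longrightarrow> b < J \<Longrightarrow> a \<noteq> b \<Longrightarrow> S a b = 0"
    and eq: "A i j = (\<Sum>a<I. \<Sum>b<J. U i a * S a b * cnj (V j b))"
    unfolding is_svd_def by auto
  have "A i j = (\<Sum>a<I. if a < J then U i a * S a a * cnj (V j a) else 0)"
    unfolding eq
  proof (intro sum.cong refl)
    fix a assume a: "a \<in> {..<I}"
    have "(\<Sum>b<J. U i a * S a b * cnj (V j b)) = (\<Sum>b<J. if b = a then U i a * S a a * cnj (V j a) else 0)"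
      by (intro sum.cong refl) (use a diag in auto)
    thus "(\<Sum>b<J. U i a * S a b * cnj (V j b)) = (if a < J then U i a * S a a * cnj (V j a) else 0)"
      by simp
  qed
  also have "\<dots> = (\<Sum>a\<in>{..<I} \<inter> {a. a < J}. U i a * S a a * cnj (V j a))"
    by (simp add: sum.inter_restrict)
  also have "{..<I} \<inter> {a. a < J} = {..<min I J}" by auto
  finally show ?thesis .
qed

lemma svd_colnorm:
  assumes svd: "is_svd I J A U S V"
  shows "(\<Sum>j<J. (cmod (\<Sum>i<I. cnj (w i) * A i j))\<^sup>2)
       = (\<Sum>a<min I J. (cmod (S a a))\<^sup>2 * (cmod (\<Sum>i<I. cnj (w i) * U i a))\<^sup>2)"
proof -
  have uV: "unitary_on J V" using svd unfolding is_svd_def by auto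
  have "(\<Sum>i<I. cnj (w i) * A i j) = (\<Sum>a<min I J. cnj (V j a) * (S a a * (\<Sum>i<I. cnj (w i) * U i a)))"
    if j: "j < J" for j
  proof -
    have "(\<Sum>i<I. cnj (w i) * A i j) = (\<Sum>i<I. cnj (w i) * (\<Sum>a<min I J. U i a * S a a * cnj (V j a)))"
      by (intro sum.cong refl) (simp add: svd_entry[OF svd _ j])
    also have "\<dots> = (\<Sum>a<min I J. cnj (V j a) * (S a a * (\<Sum>i<I. cnj (w i) * U i a)))"
      by (simp add: sum_distrib_left sum_distrib_right mult_ac sum.swap[of _ "{..<I}"])
    finally show ?thesis .
  qed
  hence "(\<Sum>j<J. (cmod (\<Sum>i<I. cnj (w i) * A i j))\<^sup>2)
       = (\<Sum>j<J. (cmod (\<Sum>a<min I J. cnj (V j a) * (S a a * (\<Sum>i<I. cnj (w i) * U i a))))\<^sup>2)"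
    by simp
  also have "\<dots> = (\<Sum>a<min I J. (cmod (S a a * (\<Sum>i<I. cnj (w i) * U i a)))\<^sup>2)"
  proof (rule parseval_cols)
    fix a b assume "a \<in> {..<min I J}" "b \<in> {..<min I J}"
    hence ab: "a < J" "b < J" by auto
    have "(\<Sum>l<J. cnj (V l a) * V l b) = (if a = b then 1 else 0)"
      using uV ab unfolding unitary_on_def by auto
    hence "cnj (\<Sum>l<J. cnj (V l a) * V l b) = (if a = b then 1 else 0)" by simp
    thus "(\<Sum>i<J. cnj (cnj (V i a)) * cnj (V i b)) = (if a = b then 1 else 0)"
      by (simp add: mult.commute)
  qed auto
  also have "\<dots> = (\<Sum>a<min I J. (cmod (S a a))\<^sup>2 * (cmod (\<Sum>i<I. cnj (w i) * U i a))\<^sup>2)"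
    by (simp add: norm_mult power_mult_distrib)
  finally show ?thesis .
qed

lemma weighted_tail:
  fixes d c :: "nat \<Rightarrow> real" and K r :: nat
  assumes d0: "\<And>a. a < K \<Longrightarrow> 0 \<le> d a"
    and dmono: "\<And>a. Suc a < K \<Longrightarrow> d (Suc a) \<le> d a"
    and c01: "\<And>a. a < K \<Longrightarrow> 0 \<le> c a \<and> c a \<le> 1"
    and csum: "(\<Sum>a<K. c a) \<le> real r"
  shows "(\<Sum>a<K. d a * c a) \<le> (\<Sum>a<min r K. d a)"
proof (cases "K \<le> r")
  case True
  have "(\<Sum>a<K. d a * c a) \<le> (\<Sum>a<K. d a)"
    by (intro sum_mono) (use d0 c01 in \<open>auto intro: mult_left_le\<close>)
  thus ?thesis using True by (simp add: min_absorb2)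
next
  case False
  hence rK: "r < K" by simp
  have mono: "d b \<le> d a" if "a \<le> b" "b < K" for a b
    using that
  proof (induction b)
    case 0 thus ?case by simp
  next
    case (Suc b)
    show ?case
    proof (cases "a = Suc b")
      case True thus ?thesis by simp
    next
      case False
      hence "a \<le> b" using Suc by simp
      with Suc have "d b \<le> d a" by simp
      moreover have "d (Suc b) \<le> d b" using dmono Suc by simp
      ultimately show ?thesis by simp
    qed
  qed
  define t where "t = d r"
  have t0: "0 \<le> t" unfolding t_def using d0 rK by simp
  have split: "{..<K} = {..<r} \<union> {r..<K}" using rK by auto
  have disj: "{..<r} \<inter> {r..<K} = {}" by auto
  have "(\<Sum>a<K. d a * c a) = (\<Sum>a<r. d a * c a) + (\<Sum>a\<in>{r..<K}. d a * c a)"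
    unfolding split by (rule sum.union_disjoint) (auto simp: disj)
  also have "\<dots> \<le> (\<Sum>a<r. d a - t + t * c a) + (\<Sum>a\<in>{r..<K}. t * c a)"
  proof (intro add_mono sum_mono)
    fix a assume a: "a \<in> {..<r}"
    have "d a \<ge> t" unfolding t_def using mono[of a r] a rK by simp
    moreover have "0 \<le> 1 - c a" using c01[of a] a rK by simp
    ultimately have "0 \<le> (d a - t) * (1 - c a)" by simp
    thus "d a * c a \<le> d a - t + t * c a" by (simp add: algebra_simps)
  next
    fix a assume a: "a \<in> {r..<K}"
    have "d a \<le> t" unfolding t_def using mono[of r a] a by simp
    thus "d a * c a \<le> t * c a" using c01[of a] a by (simp add: mult_right_mono)
  qed
  also have "\<dots> = (\<Sum>a<r. d a) - t * real r + t * (\<Sum>a<K. c a)"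
  proof -
    have "(\<Sum>a<K. c a) = (\<Sum>a<r. c a) + (\<Sum>a\<in>{r..<K}. c a)"
      unfolding split by (rule sum.union_disjoint) (auto simp: disj)
    thus ?thesis by (simp add: sum.distrib sum_subtractf sum_distrib_left algebra_simps)
  qed
  also have "\<dots> \<le> (\<Sum>a<r. d a)"
    using mult_left_mono[OF csum t0] by simp
  finally show ?thesis using rK by (simp add: min_absorb1)
qed

lemma delta_sum:
  fixes I :: nat
  assumes "i \<in> {..<I}"
  shows "(\<Sum>s<I. cnj (if s = i then 1 else 0) * f s) = (f i :: complex)"
proof -
  have "(\<Sum>s<I. cnj (if s = i then 1 else 0) * f s) = (\<Sum>s<I. if s = i then f s else 0)"
    by (intro sum.cong refl) simp
  also have "\<dots> = f i" using assms by (subst sum.delta) auto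
  finally show ?thesis .
qed

lemma svd_frob:
  assumes svd: "is_svd I J A U S V"
  shows "(\<Sum>j<J. \<Sum>i<I. (cmod (A i j))\<^sup>2) = (\<Sum>a<min I J. (cmod (S a a))\<^sup>2)"
proof -
  have uU: "unitary_on I U" using svd unfolding is_svd_def by auto
  have "(\<Sum>j<J. \<Sum>i<I. (cmod (A i j))\<^sup>2) = (\<Sum>i<I. \<Sum>j<J. (cmod (\<Sum>s<I. cnj (if s = i then 1 else 0) * A s j))\<^sup>2)"
  proof (subst sum.swap, intro sum.cong refl)
    fix i j assume "i \<in> {..<I}" "j \<in> {..<J}"
    have "(\<Sum>s<I. cnj (if s = i then 1 else 0) * A s j) = (\<Sum>s<I. if s = i then A s j else 0)"
      by (intro sum.cong refl) simp
    also have "\<dots> = A i j" using \<open>i \<in> {..<I}\<close> by simp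
    finally show "(cmod (A i j))\<^sup>2 = (cmod (\<Sum>s<I. cnj (if s = i then 1 else 0) * A s j))\<^sup>2" by simp
  qed
  also have "\<dots> = (\<Sum>i<I. \<Sum>a<min I J. (cmod (S a a))\<^sup>2 * (cmod (\<Sum>s<I. cnj (if s = i then 1 else 0) * U s a))\<^sup>2)"
    by (intro sum.cong refl svd_colnorm[OF svd])
  also have "\<dots> = (\<Sum>a<min I J. (cmod (S a a))\<^sup>2 * (\<Sum>i<I. (cmod (U i a))\<^sup>2))"
    by (subst sum.swap) (simp add: sum_distrib_left delta_sum)
  also have "\<dots> = (\<Sum>a<min I J. (cmod (S a a))\<^sup>2)"
  proof (intro sum.cong refl)
    fix a assume "a \<in> {..<min I J}"
    hence a: "a < I" by simp
    have "(\<Sum>l<I. cnj (U l a) * U l a) = 1" using uU a unfolding unitary_on_def by auto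
    hence "complex_of_real (\<Sum>i<I. (cmod (U i a))\<^sup>2) = 1"
      unfolding of_real_sum cmod_sq_of_real by (simp add: mult.commute)
    hence "(\<Sum>i<I. (cmod (U i a))\<^sup>2) = 1" by (metis of_real_eq_1_iff)
    thus "(cmod (S a a))\<^sup>2 * (\<Sum>i<I. (cmod (U i a))\<^sup>2) = (cmod (S a a))\<^sup>2" by simp
  qed
  finally show ?thesis .
qed

lemma svd_projsum:
  assumes svd: "is_svd I J A U S V"
  shows "(\<Sum>j<J. \<Sum>l<r. (cmod (\<Sum>s<I. cnj (W s l) * A s j))\<^sup>2)
     = (\<Sum>a<min I J. (cmod (S a a))\<^sup>2 * (\<Sum>l<r. (cmod (\<Sum>s<I. cnj (W s l) * U s a))\<^sup>2))"
  by (subst sum.swap) (simp add: svd_colnorm[OF svd] sum_distrib_left sum.swap[of _ "{..<r}"])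

lemma sum_split_at:
  fixes K r :: nat
  shows "(\<Sum>a<K. f a) = (\<Sum>a<min r K. f a) + (\<Sum>a\<in>{r..<K}. f a)"
proof -
  have "(\<Sum>a<K. f a) = sum f ({..<min r K} \<union> {r..<K})" by (rule sum.cong) auto
  also have "\<dots> = (\<Sum>a<min r K. f a) + (\<Sum>a\<in>{r..<K}. f a)" by (rule sum.union_disjoint) auto
  finally show ?thesis .
qed

lemma svd_sq_props:
  assumes svd: "is_svd I J A U S V"
  shows "\<And>a. Suc a < min I J \<Longrightarrow> (cmod (S (Suc a) (Suc a)))\<^sup>2 \<le> (cmod (S a a))\<^sup>2"
proof -
  fix a assume a: "Suc a < min I J"
  have re: "\<And>i. i < min I J \<Longrightarrow> cmod (S i i) = Re (S i i)"
  proof -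
    fix i assume "i < min I J"
    hence "S i i \<in> \<real>" "0 \<le> Re (S i i)" using svd unfolding is_svd_def by auto
    thus "cmod (S i i) = Re (S i i)" by (metis Reals_cases Re_complex_of_real norm_of_real abs_of_nonneg)
  qed
  have "Re (S (Suc a) (Suc a)) \<le> Re (S a a)" "0 \<le> Re (S (Suc a) (Suc a))"
    using svd a unfolding is_svd_def by auto
  thus "(cmod (S (Suc a) (Suc a)))\<^sup>2 \<le> (cmod (S a a))\<^sup>2"
    using re[of a] re[of "Suc a"] a by (simp add: power_mono)
qed

lemma svd_lower:
  fixes r :: nat
  assumes svd: "is_svd I J A U S V"
    and orth: "\<And>a b. a<r \<Longrightarrow> b<r \<Longrightarrow> (\<Sum>i<I. cnj (W i a) * W i b) = (if a = b then 1 else 0)"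
  shows "(\<Sum>j<J. \<Sum>i<I. (cmod (A i j - (\<Sum>l<r. W i l * M l j)))\<^sup>2)
     \<ge> (\<Sum>a<min I J. (cmod (S a a))\<^sup>2 * (1 - (\<Sum>l<r. (cmod (\<Sum>s<I. cnj (W s l) * U s a))\<^sup>2)))"
proof -
  have "(\<Sum>j<J. \<Sum>i<I. (cmod (A i j - (\<Sum>l<r. W i l * M l j)))\<^sup>2)
      \<ge> (\<Sum>j<J. (\<Sum>i<I. (cmod (A i j))\<^sup>2) - (\<Sum>l<r. (cmod (\<Sum>s<I. cnj (W s l) * A s j))\<^sup>2))"
  proof (intro sum_mono)
    fix j
    show "(\<Sum>i<I. (cmod (A i j))\<^sup>2) - (\<Sum>l<r. (cmod (\<Sum>s<I. cnj (W s l) * A s j))\<^sup>2)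
        \<le> (\<Sum>i<I. (cmod (A i j - (\<Sum>l<r. W i l * M l j)))\<^sup>2)"
      using proj_identity[of "{..<I}" "{..<r}" W "\<lambda>i. A i j" "\<lambda>l. M l j"] orth
      by (simp add: sum_nonneg)
  qed
  also have "(\<Sum>j<J. (\<Sum>i<I. (cmod (A i j))\<^sup>2) - (\<Sum>l<r. (cmod (\<Sum>s<I. cnj (W s l) * A s j))\<^sup>2))
     = (\<Sum>a<min I J. (cmod (S a a))\<^sup>2) - (\<Sum>a<min I J. (cmod (S a a))\<^sup>2 * (\<Sum>l<r. (cmod (\<Sum>s<I. cnj (W s l) * U s a))\<^sup>2))"
    by (simp add: sum_subtractf svd_frob[OF svd] svd_projsum[OF svd])
  also have "\<dots> = (\<Sum>a<min I J. (cmod (S a a))\<^sup>2 * (1 - (\<Sum>l<r. (cmod (\<Sum>s<I. cnj (W s l) * U s a))\<^sup>2)))"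
    by (simp add: sum_subtractf algebra_simps)
  finally show ?thesis .
qed

lemma svd_eckart:
  fixes r :: nat
  assumes svd: "is_svd I J A U S V"
    and orth: "\<And>a b. a<r \<Longrightarrow> b<r \<Longrightarrow> (\<Sum>i<I. cnj (W i a) * W i b) = (if a = b then 1 else 0)"
  shows "(\<Sum>a\<in>{r..<min I J}. (cmod (S a a))\<^sup>2)
     \<le> (\<Sum>i<I. \<Sum>j<J. (cmod (A i j - (\<Sum>l<r. W i l * M l j)))\<^sup>2)"
proof -
  have uU: "unitary_on I U" using svd unfolding is_svd_def by auto
  define c where "c a = (\<Sum>l<r. (cmod (\<Sum>s<I. cnj (W s l) * U s a))\<^sup>2)" for a
  define d where "d a = (cmod (S a a))\<^sup>2" for a
  define K where "K = min I J"
  have c1: "0 \<le> c a \<and> c a \<le> 1" if "a < K" for a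
  proof
    show "0 \<le> c a" unfolding c_def by (simp add: sum_nonneg)
    have "c a \<le> (\<Sum>i<I. (cmod (U i a))\<^sup>2)"
      unfolding c_def by (rule bessel) (auto simp: orth)
    also have "(\<Sum>i<I. (cmod (U i a))\<^sup>2) = 1"
    proof -
      have "(\<Sum>l<I. cnj (U l a) * U l a) = 1" using uU that unfolding unitary_on_def K_def by auto
      hence "complex_of_real (\<Sum>i<I. (cmod (U i a))\<^sup>2) = 1"
        unfolding of_real_sum cmod_sq_of_real by (simp add: mult.commute)
      thus ?thesis by (metis of_real_eq_1_iff)
    qed
    finally show "c a \<le> 1" .
  qed
  have csum: "(\<Sum>a<K. c a) \<le> real r"
  proof -
    have "(\<Sum>a<K. c a) \<le> (\<Sum>a<I. c a)"
      by (rule sum_mono2) (auto simp: K_def c_def sum_nonneg)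
    also have "\<dots> = (\<Sum>l<r. \<Sum>a<I. (cmod (\<Sum>s<I. U s a * cnj (W s l)))\<^sup>2)"
      unfolding c_def by (subst sum.swap) (simp add: mult.commute)
    also have "\<dots> = (\<Sum>l<r. \<Sum>s<I. (cmod (cnj (W s l)))\<^sup>2)"
    proof (rule sum.cong[OF refl])
      have orthU: "(\<Sum>i<I. cnj (U a i) * U b i) = (if a = b then 1 else 0)" if ab: "a \<in> {..<I}" "b \<in> {..<I}" for a b
      proof -
        have "(\<Sum>l<I. U b l * cnj (U a l)) = (if b = a then 1 else 0)"
          using uU ab unfolding unitary_on_def by auto
        thus ?thesis by (auto simp: mult.commute)
      qed
      fix l
      show "(\<Sum>a<I. (cmod (\<Sum>s<I. U s a * cnj (W s l)))\<^sup>2) = (\<Sum>s<I. (cmod (cnj (W s l)))\<^sup>2)"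
        using parseval_cols[of "{..<I}" "{..<I}" "\<lambda>a s. U s a" "\<lambda>s. cnj (W s l)"] orthU by simp
    qed
    also have "\<dots> = (\<Sum>l<r. 1)"
    proof (intro sum.cong refl)
      fix l assume "l \<in> {..<r}"
      hence "(\<Sum>i<I. cnj (W i l) * W i l) = 1" using orth by auto
      hence "complex_of_real (\<Sum>s<I. (cmod (W s l))\<^sup>2) = 1"
        unfolding of_real_sum cmod_sq_of_real by (simp add: mult.commute)
      hence "(\<Sum>s<I. (cmod (W s l))\<^sup>2) = 1" by (metis of_real_eq_1_iff)
      thus "(\<Sum>s<I. (cmod (cnj (W s l)))\<^sup>2) = 1" by simp
    qed
    finally show ?thesis by simp
  qed
  have wt: "(\<Sum>a<K. d a * c a) \<le> (\<Sum>a<min r K. d a)"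
    by (rule weighted_tail) (use c1 csum svd_sq_props[OF svd] in \<open>auto simp: d_def K_def\<close>)
  have "(\<Sum>a\<in>{r..<K}. d a) = (\<Sum>a<K. d a) - (\<Sum>a<min r K. d a)"
    using sum_split_at[of d K r] by simp
  also have "\<dots> \<le> (\<Sum>a<K. d a * (1 - c a))"
    using wt by (simp add: algebra_simps sum_subtractf)
  also have "\<dots> \<le> (\<Sum>j<J. \<Sum>i<I. (cmod (A i j - (\<Sum>l<r. W i l * M l j)))\<^sup>2)"
    using svd_lower[OF svd orth, where M = M] unfolding c_def d_def K_def by simp
  also have "\<dots> = (\<Sum>i<I. \<Sum>j<J. (cmod (A i j - (\<Sum>l<r. W i l * M l j)))\<^sup>2)"
    by (rule sum.swap)
  finally show ?thesis unfolding d_def K_def .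
qed

lemma svd_trunc:
  fixes r :: nat
  assumes svd: "is_svd I J A U S V" and rI: "r \<le> I"
  shows "(\<Sum>i<I. \<Sum>j<J. (cmod (A i j - (\<Sum>l<r. U i l * (\<Sum>s<I. cnj (U s l) * A s j))))\<^sup>2)
       = (\<Sum>a\<in>{r..<min I J}. (cmod (S a a))\<^sup>2)"
proof -
  have uU: "unitary_on I U" using svd unfolding is_svd_def by auto
  have orth: "\<And>a b. a<r \<Longrightarrow> b<r \<Longrightarrow> (\<Sum>i<I. cnj (U i a) * U i b) = (if a = b then 1 else 0)"
    using uU rI unfolding unitary_on_def by auto
  have "(\<Sum>i<I. \<Sum>j<J. (cmod (A i j - (\<Sum>l<r. U i l * (\<Sum>s<I. cnj (U s l) * A s j))))\<^sup>2)
     = (\<Sum>j<J. (\<Sum>i<I. (cmod (A i j))\<^sup>2) - (\<Sum>l<r. (cmod (\<Sum>s<I. cnj (U s l) * A s j))\<^sup>2))"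
  proof (subst sum.swap, intro sum.cong refl)
    fix j
    show "(\<Sum>i<I. (cmod (A i j - (\<Sum>l<r. U i l * (\<Sum>s<I. cnj (U s l) * A s j))))\<^sup>2)
       = (\<Sum>i<I. (cmod (A i j))\<^sup>2) - (\<Sum>l<r. (cmod (\<Sum>s<I. cnj (U s l) * A s j))\<^sup>2)"
      using proj_identity[of "{..<I}" "{..<r}" U "\<lambda>i. A i j" "\<lambda>l. \<Sum>s<I. cnj (U s l) * A s j"] orth
      by simp
  qed
  also have "\<dots> = (\<Sum>a<min I J. (cmod (S a a))\<^sup>2) - (\<Sum>a<min I J. (cmod (S a a))\<^sup>2 * (\<Sum>l<r. (cmod (\<Sum>s<I. cnj (U s l) * U s a))\<^sup>2))"
    by (simp add: sum_subtractf svd_frob[OF svd] svd_projsum[OF svd])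
  also have "(\<Sum>a<min I J. (cmod (S a a))\<^sup>2 * (\<Sum>l<r. (cmod (\<Sum>s<I. cnj (U s l) * U s a))\<^sup>2))
      = (\<Sum>a<min I J. (cmod (S a a))\<^sup>2 * (if a < r then 1 else 0))"
  proof (intro sum.cong refl)
    fix a assume "a \<in> {..<min I J}"
    hence a: "a < I" by simp
    have "(\<Sum>l<r. (cmod (\<Sum>s<I. cnj (U s l) * U s a))\<^sup>2) = (\<Sum>l<r. (if l = a then 1 else 0))"
    proof (intro sum.cong refl)
      fix l assume "l \<in> {..<r}"
      hence "l < I" using rI by simp
      hence "(\<Sum>s<I. cnj (U s l) * U s a) = (if l = a then 1 else 0)"
        using uU a unfolding unitary_on_def by auto
      thus "(cmod (\<Sum>s<I. cnj (U s l) * U s a))\<^sup>2 = (if l = a then 1 else 0)" by simp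
    qed
    also have "\<dots> = (if a < r then 1 else 0)" by (subst sum.delta) auto
    finally show "(cmod (S a a))\<^sup>2 * (\<Sum>l<r. (cmod (\<Sum>s<I. cnj (U s l) * U s a))\<^sup>2)
      = (cmod (S a a))\<^sup>2 * (if a < r then 1 else 0)" by simp
  qed
  also have "(\<Sum>a<min I J. (cmod (S a a))\<^sup>2 * (if a < r then 1 else 0)) = (\<Sum>a<min r (min I J). (cmod (S a a))\<^sup>2)"
  proof -
    have "(\<Sum>a<min I J. (cmod (S a a))\<^sup>2 * (if a < r then 1 else 0)) = (\<Sum>a\<in>{..<min I J} \<inter> {a. a < r}. (cmod (S a a))\<^sup>2)"
      by (simp add: sum.inter_restrict if_distrib cong: if_cong)
    also have "{..<min I J} \<inter> {a. a < r} = {..<min r (min I J)}" by auto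
    finally show ?thesis .
  qed
  also have "(\<Sum>a<min I J. (cmod (S a a))\<^sup>2) - (\<Sum>a<min r (min I J). (cmod (S a a))\<^sup>2)
      = (\<Sum>a\<in>{r..<min I J}. (cmod (S a a))\<^sup>2)"
    using sum_split_at[of "\<lambda>a. (cmod (S a a))\<^sup>2" "min I J" r] by simp
  finally show ?thesis .
qed




lemma tidx_finite: "finite (tidx D)"
proof -
  have "tidx D \<subseteq> {xs. set xs \<subseteq> {..<sum_list D} \<and> length xs = length D}"
  proof
    fix xs assume "xs \<in> tidx D"
    hence l: "length xs = length D" and lt: "\<forall>m<length D. xs ! m < D ! m" unfolding tidx_def by auto
    have "set xs \<subseteq> {..<sum_list D}"
    proof
      fix x assume "x \<in> set xs"
      then obtain m where m: "m < length xs" "xs ! m = x" by (auto simp: in_set_conv_nth)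
      have "D ! m \<le> sum_list D" using m l by (intro elem_le_sum_list) simp
      thus "x \<in> {..<sum_list D}" using lt m l by force
    qed
    with l show "xs \<in> {xs. set xs \<subseteq> {..<sum_list D} \<and> length xs = length D}" by simp
  qed
  moreover have "finite {xs. set xs \<subseteq> {..<sum_list D} \<and> length xs = length D}"
    by (rule finite_lists_length_eq) simp
  ultimately show ?thesis by (rule finite_subset)
qed

lemma tidx_split:
  assumes n: "n < length D"
  shows "(\<Sum>is\<in>tidx D. f is) = (\<Sum>u\<in>tidx (D[n:=1]). \<Sum>i<D!n. f (u[n:=i]))"
proof -
  have bij: "bij_betw (\<lambda>(u,i). u[n:=i]) (tidx (D[n:=1]) \<times> {..<D!n}) (tidx D)"
  proof (rule bij_betwI')
    fix x y assume x: "x \<in> tidx (D[n:=1]) \<times> {..<D!n}" and y: "y \<in> tidx (D[n:=1]) \<times> {..<D!n}"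
    obtain u i where xo: "x = (u,i)" by (cases x)
    obtain v i' where yo: "y = (v,i')" by (cases y)
    have lo: "length u = length D" "u ! n = 0" using x xo n unfolding tidx_def by auto
    have lo': "length v = length D" "v ! n = 0" using y yo n unfolding tidx_def by auto
    show "((\<lambda>(u,i). u[n:=i]) x = (\<lambda>(u,i). u[n:=i]) y) = (x = y)"
    proof
      assume eq: "(\<lambda>(u,i). u[n:=i]) x = (\<lambda>(u,i). u[n:=i]) y"
      hence e: "u[n:=i] = v[n:=i']" using xo yo by simp
      hence "i = i'" using lo lo' n by (metis nth_list_update_eq)
      moreover have "u = v"
      proof -
        have "u = (u[n:=i])[n:=0]" using lo by (metis list_update_id list_update_overwrite)
        also have "\<dots> = (v[n:=i'])[n:=0]" using e by simp
        also have "\<dots> = v" using lo' by (metis list_update_id list_update_overwrite)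
        finally show ?thesis .
      qed
      ultimately show "x = y" using xo yo by simp
    qed simp
  next
    fix x assume x: "x \<in> tidx (D[n:=1]) \<times> {..<D!n}"
    obtain u i where xo: "x = (u,i)" by (cases x)
    with x show "(\<lambda>(u,i). u[n:=i]) x \<in> tidx D" using n unfolding tidx_def
      by (auto simp: nth_list_update)
  next
    fix y assume y: "y \<in> tidx D"
    show "\<exists>x\<in>tidx (D[n:=1]) \<times> {..<D!n}. y = (\<lambda>(u,i). u[n:=i]) x"
    proof (intro bexI)
      show "y = (\<lambda>(u,i). u[n:=i]) (y[n:=0], y!n)" by simp
      show "(y[n:=0], y!n) \<in> tidx (D[n:=1]) \<times> {..<D!n}"
        using y n unfolding tidx_def by (auto simp: nth_list_update)
    qed
  qed
  have "(\<Sum>is\<in>tidx D. f is) = (\<Sum>x\<in>tidx (D[n:=1]) \<times> {..<D!n}. f ((\<lambda>(u,i). u[n:=i]) x))"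
    by (rule sum.reindex_bij_betw[symmetric]) (rule bij)
  also have "\<dots> = (\<Sum>u\<in>tidx (D[n:=1]). \<Sum>i<D!n. f (u[n:=i]))"
    by (subst sum.cartesian_product) (rule sum.cong, auto)
  finally show ?thesis .
qed

lemma sum_divmod:
  fixes d q :: nat
  shows "(\<Sum>j<d*q. F (j mod d) (j div d)) = (\<Sum>i<d. \<Sum>j<q. F i j)"
proof (induction q)
  case 0 thus ?case by simp
next
  case (Suc q)
  have "{..<d * Suc q} = {..<d*q} \<union> {d*q..<d*q+d}" by auto
  hence "(\<Sum>j<d * Suc q. F (j mod d) (j div d)) = (\<Sum>j<d*q. F (j mod d) (j div d)) + (\<Sum>j\<in>{d*q..<d*q+d}. F (j mod d) (j div d))"
    by (simp add: sum.union_disjoint ivl_disj_int)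
  also have "(\<Sum>j\<in>{d*q..<d*q+d}. F (j mod d) (j div d)) = (\<Sum>i\<in>{0..<d}. F ((i + d*q) mod d) ((i + d*q) div d))"
    using sum.shift_bounds_nat_ivl[of "\<lambda>j. F (j mod d) (j div d)" 0 "d*q" d] by (simp add: add.commute)
  also have "\<dots> = (\<Sum>i<d. F i q)"
    by (rule sum.cong) auto
  finally show ?case using Suc by (simp add: sum.distrib)
qed

definition Q :: "nat list \<Rightarrow> nat \<Rightarrow> nat \<Rightarrow> nat" where
  "Q D n k = (\<Prod>m\<in>{m. m < k \<and> m \<noteq> n}. D ! m)"
definition ui :: "nat list \<Rightarrow> nat \<Rightarrow> nat \<Rightarrow> nat list" where
  "ui D n j = map (\<lambda>k. if k = n then 0 else (j div Q D n k) mod D ! k) [0..<length D]"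
definition tidx' :: "nat list \<Rightarrow> nat \<Rightarrow> nat list set" where
  "tidx' D n = {is. length is = length D \<and> (\<forall>m<length D. if m = n then is!m = 0 else is!m < D!m)}"

lemma Q_cons0: "k \<le> length D \<Longrightarrow> Q (d#D) 0 (Suc k) = Q D (length D) k"
proof -
  assume k: "k \<le> length D"
  have e1: "{m. m < Suc k \<and> m \<noteq> 0} = {Suc 0..<Suc k}" by auto
  have e2: "{m. m < k \<and> m \<noteq> length D} = {0..<k}" using k by auto
  show ?thesis unfolding Q_def e1 e2 prod.shift_bounds_Suc_ivl by simp
qed
lemma Q_consSuc: "Q (d#D) (Suc n) (Suc k) = d * Q D n k"
proof -
  have "{m. m < Suc k \<and> m \<noteq> Suc n} = insert 0 (Suc ` {m. m < k \<and> m \<noteq> n})"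
  proof (rule set_eqI)
    fix x show "x \<in> {m. m < Suc k \<and> m \<noteq> Suc n} \<longleftrightarrow> x \<in> insert 0 (Suc ` {m. m < k \<and> m \<noteq> n})"
    proof (cases x)
      case 0 thus ?thesis by simp
    next
      case (Suc y) thus ?thesis by (simp add: image_iff)
    qed
  qed
  thus ?thesis unfolding Q_def by (simp add: prod.reindex)
qed

lemma Q_0: "Q D n 0 = 1" unfolding Q_def by simp

lemma ui_sum: "(\<Sum>j<Q D n (length D). h (ui D n j)) = (\<Sum>u\<in>tidx' D n. h u)"
proof (induction D arbitrary: n h)
  case Nil
  have "tidx' [] n = {[]}" unfolding tidx'_def by auto
  thus ?case by (simp add: Q_0 ui_def)
next
  case (Cons d D)
  show ?case
  proof (cases n)
    case 0
    have ui: "ui (d#D) 0 j = 0 # ui D (length D) j" for j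
      unfolding ui_def by (simp add: upt_conv_Cons map_Suc_upt[symmetric] Q_cons0 del: upt_Suc)
    have T: "tidx' (d#D) 0 = (\<lambda>u. 0 # u) ` tidx' D (length D)"
    proof (rule set_eqI, rule iffI)
      fix x assume x: "x \<in> tidx' (d#D) 0"
      then obtain a u where xa: "x = a # u" unfolding tidx'_def by (cases x) auto
      have "a = 0" using x xa unfolding tidx'_def by (auto dest: spec[of _ 0])
      moreover have "u \<in> tidx' D (length D)"
      proof -
        have "length u = length D" using x xa unfolding tidx'_def by auto
        moreover have "u ! m < D ! m" if "m < length D" for m
          using x xa that unfolding tidx'_def by (auto dest: spec[of _ "Suc m"])
        ultimately show ?thesis unfolding tidx'_def by auto
      qed
      ultimately show "x \<in> (\<lambda>u. 0 # u) ` tidx' D (length D)" using xa by blast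
    next
      fix x assume "x \<in> (\<lambda>u. 0 # u) ` tidx' D (length D)"
      then show "x \<in> tidx' (d#D) 0" unfolding tidx'_def
        by (auto simp: nth_Cons split: nat.split)
    qed
    have "(\<Sum>j<Q (d#D) n (length (d#D)). h (ui (d#D) n j)) = (\<Sum>j<Q D (length D) (length D). h (0 # ui D (length D) j))"
      using 0 by (simp add: ui Q_cons0)
    also have "\<dots> = (\<Sum>u\<in>tidx' D (length D). h (0 # u))" by (rule Cons.IH)
    also have "\<dots> = (\<Sum>u\<in>tidx' (d#D) n. h u)"
      unfolding 0 T by (subst sum.reindex) (auto simp: inj_on_def)
    finally show ?thesis .
  next
    case (Suc n')
    have ui: "ui (d#D) (Suc n') j = (j mod d) # ui D n' (j div d)" for j
      unfolding ui_def by (simp add: upt_conv_Cons map_Suc_upt[symmetric] Q_consSuc Q_0 div_mult2_eq del: upt_Suc)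
    have T: "tidx' (d#D) (Suc n') = (\<lambda>(i,u). i # u) ` ({..<d} \<times> tidx' D n')"
    proof (rule set_eqI, rule iffI)
      fix x assume x: "x \<in> tidx' (d#D) (Suc n')"
      then obtain i u where xi: "x = i # u" unfolding tidx'_def by (cases x) auto
      have "i < d" using x xi unfolding tidx'_def by (auto dest: spec[of _ 0])
      moreover have "u \<in> tidx' D n'"
        using x xi unfolding tidx'_def by (auto dest: spec[of _ "Suc _"])
      ultimately show "x \<in> (\<lambda>(i,u). i # u) ` ({..<d} \<times> tidx' D n')" using xi by force
    next
      fix x assume "x \<in> (\<lambda>(i,u). i # u) ` ({..<d} \<times> tidx' D n')"
      then show "x \<in> tidx' (d#D) (Suc n')" unfolding tidx'_def
        by (auto simp: nth_Cons split: nat.split)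
    qed
    have "(\<Sum>j<Q (d#D) n (length (d#D)). h (ui (d#D) n j)) = (\<Sum>j<d * Q D n' (length D). h ((j mod d) # ui D n' (j div d)))"
      using Suc by (simp add: ui Q_consSuc)
    also have "\<dots> = (\<Sum>i<d. \<Sum>j<Q D n' (length D). h (i # ui D n' j))"
      by (rule sum_divmod[where F = "\<lambda>i j. h (i # ui D n' j)"])
    also have "\<dots> = (\<Sum>i<d. \<Sum>u\<in>tidx' D n'. h (i # u))"
      by (intro sum.cong refl Cons.IH[where h = "\<lambda>u. h (i # u)" for i])
    also have "\<dots> = (\<Sum>x\<in>{..<d} \<times> tidx' D n'. h ((\<lambda>(i,u). i # u) x))"
      by (subst sum.cartesian_product) (rule sum.cong, auto)
    also have "\<dots> = (\<Sum>u\<in>tidx' (d#D) n. h u)"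
      unfolding Suc T by (subst sum.reindex) (auto simp: inj_on_def)
    finally show ?thesis .
  qed
qed

lemma tidx'_eq: "n < length D \<Longrightarrow> tidx' D n = tidx (D[n:=1])"
  unfolding tidx'_def tidx_def by (auto simp: nth_list_update)

lemma unfold_idx_ui: "n < length D \<Longrightarrow> unfold_idx D n i j = (ui D n j)[n := i]"
  unfolding unfold_idx_def ui_def Q_def by (rule nth_equalityI) (auto simp: nth_list_update)

lemma unfold_idx_nth: "n < length D \<Longrightarrow> unfold_idx D n i j ! n = i"
  unfolding unfold_idx_def by simp

lemma unfold_idx_upd: "n < length D \<Longrightarrow> (unfold_idx D n i j)[n := r] = unfold_idx D n r j"
  by (simp add: unfold_idx_ui)

lemma unfold_idx_length: "length (unfold_idx D n i j) = length D"
  unfolding unfold_idx_def by simp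

lemma unfold_sum:
  assumes n: "n < length D"
  shows "(\<Sum>is\<in>tidx D. f is) = (\<Sum>i<D!n. \<Sum>j<unfold_cols D n. f (unfold_idx D n i j))"
proof -
  have "(\<Sum>is\<in>tidx D. f is) = (\<Sum>u\<in>tidx' D n. \<Sum>i<D!n. f (u[n:=i]))"
    using tidx_split[OF n, of f] tidx'_eq[OF n] by simp
  also have "\<dots> = (\<Sum>j<Q D n (length D). \<Sum>i<D!n. f ((ui D n j)[n:=i]))"
    by (rule ui_sum[symmetric])
  also have "\<dots> = (\<Sum>j<unfold_cols D n. \<Sum>i<D!n. f (unfold_idx D n i j))"
    by (simp add: unfold_idx_ui[OF n] unfold_cols_def Q_def)
  also have "\<dots> = (\<Sum>i<D!n. \<Sum>j<unfold_cols D n. f (unfold_idx D n i j))"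
    by (rule sum.swap)
  finally show ?thesis .
qed




lemma parseval_c2:
  fixes W :: "'a \<Rightarrow> 'b \<Rightarrow> complex"
  assumes S: "finite S" and T: "finite T"
    and orth: "\<And>a b. a\<in>T \<Longrightarrow> b\<in>T \<Longrightarrow> (\<Sum>i\<in>S. cnj (W i a) * W i b) = (if a = b then 1 else 0)"
  shows "(\<Sum>i\<in>S. (\<Sum>l\<in>T. W i l * m l) * cnj (\<Sum>l\<in>T. W i l * m' l)) = (\<Sum>l\<in>T. m l * cnj (m' l))"
proof -
  have "(\<Sum>i\<in>S. (\<Sum>l\<in>T. W i l * m l) * cnj (\<Sum>l\<in>T. W i l * m' l))
      = (\<Sum>i\<in>S. \<Sum>l\<in>T. \<Sum>l'\<in>T. m l * cnj (m' l') * (cnj (W i l') * W i l))"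
    by (simp add: sum_product mult_ac)
  also have "\<dots> = (\<Sum>l\<in>T. \<Sum>l'\<in>T. m l * cnj (m' l') * (\<Sum>i\<in>S. cnj (W i l') * W i l))"
    by (subst sum.swap) (simp add: sum_distrib_left sum.swap[of _ S])
  also have "\<dots> = (\<Sum>l\<in>T. \<Sum>l'\<in>T. m l * cnj (m' l') * (if l' = l then 1 else 0))"
    by (intro sum.cong refl) (simp add: orth)
  also have "\<dots> = (\<Sum>l\<in>T. m l * cnj (m' l))"
    using T by (simp add: if_distrib cong: if_cong)
  finally show ?thesis .
qed

definition smode :: "nat \<Rightarrow> nat \<Rightarrow> (nat list \<Rightarrow> complex) \<Rightarrow> (nat \<Rightarrow> nat \<Rightarrow> complex) \<Rightarrow> (nat list \<Rightarrow> complex)" where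
  "smode d n X U = (\<lambda>is. \<Sum>r<d. X (is[n:=r]) * U (is!n) r)"

fun smm :: "nat list \<Rightarrow> (nat list \<Rightarrow> complex) \<Rightarrow> (nat \<Rightarrow> nat \<Rightarrow> nat \<Rightarrow> complex) \<Rightarrow> nat \<Rightarrow> nat \<Rightarrow> (nat list \<Rightarrow> complex)" where
  "smm D X M lo 0 = X"
| "smm D X M lo (Suc k) = smode (D!(lo+k)) (lo+k) (smm D X M lo k) (M (lo+k))"

lemma smode_comm:
  assumes "i \<noteq> j"
  shows "smode d j (smode e i X U) V = smode e i (smode d j X V) U"
proof (rule ext)
  fix xs
  show "smode d j (smode e i X U) V xs = smode e i (smode d j X V) U xs"
    unfolding smode_def using assms
    by (simp add: sum_distrib_left sum_distrib_right list_update_swap[of i j] mult_ac, subst sum.swap, simp add: mult_ac)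
qed

lemma smode_smm_comm:
  assumes "j < lo \<or> lo + k \<le> j"
  shows "smode d j (smm D X M lo k) V = smm D (smode d j X V) M lo k"
  using assms
proof (induction k)
  case 0 thus ?case by simp
next
  case (Suc k)
  have "smode d j (smm D X M lo (Suc k)) V = smode (D!(lo+k)) (lo+k) (smode d j (smm D X M lo k) V) (M (lo+k))"
  proof -
    have ne: "lo + k \<noteq> j" using Suc.prems by auto
    show ?thesis using smode_comm[OF ne, of d "D!(lo+k)"] by simp
  qed
  also have "\<dots> = smm D (smode d j X V) M lo (Suc k)"
  proof -
    have "j < lo \<or> lo + k \<le> j" using Suc.prems by auto
    thus ?thesis using Suc.IH by simp
  qed
  finally show ?case .
qed

lemma smm_split: "smm D X M lo (a + b) = smm D (smm D X M (lo + a) b) M lo a"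
proof (induction b)
  case 0 thus ?case by simp
next
  case (Suc b)
  have "smm D X M lo (a + Suc b) = smode (D!(lo+a+b)) (lo+a+b) (smm D X M lo (a + b)) (M (lo+a+b))"
    by (simp add: add.assoc)
  also have "\<dots> = smode (D!(lo+a+b)) (lo+a+b) (smm D (smm D X M (lo + a) b) M lo a) (M (lo+a+b))"
    using Suc by simp
  also have "\<dots> = smm D (smode (D!(lo+a+b)) (lo+a+b) (smm D X M (lo + a) b) (M (lo+a+b))) M lo a"
    by (rule smode_smm_comm) simp
  also have "\<dots> = smm D (smm D X M (lo + a) (Suc b)) M lo a" by simp
  finally show ?case .
qed

lemma smode_diff: "smode d n (\<lambda>is. X is - Y is) U = (\<lambda>is. smode d n X U is - smode d n Y U is)"
  unfolding smode_def by (simp add: algebra_simps sum_subtractf)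

lemma smm_diff: "smm D (\<lambda>is. X is - Y is) M lo k = (\<lambda>is. smm D X M lo k is - smm D Y M lo k is)"
  by (induction k) (simp_all add: smode_diff)

lemma smode_smode:
  assumes "n < length is"
  shows "smode d' n (smode d n X A) B is = smode d n X (\<lambda>i s. \<Sum>r<d'. B i r * A r s) is"
  unfolding smode_def using assms
  by (simp add: sum_distrib_left sum_distrib_right mult_ac sum.swap[of _ "{..<d}"])

definition tinner :: "nat list \<Rightarrow> (nat list \<Rightarrow> complex) \<Rightarrow> (nat list \<Rightarrow> complex) \<Rightarrow> complex" where
  "tinner D X Y = (\<Sum>is\<in>tidx D. X is * cnj (Y is))"

definition nrm :: "nat list \<Rightarrow> (nat list \<Rightarrow> complex) \<Rightarrow> real" where
  "nrm D X = (\<Sum>is\<in>tidx D. (cmod (X is))\<^sup>2)"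

lemma nrm_inner: "complex_of_real (nrm D X) = tinner D X X"
  unfolding nrm_def tinner_def of_real_sum cmod_sq_of_real ..

lemma tidx_length: "is \<in> tidx D \<Longrightarrow> length is = length D"
  unfolding tidx_def by auto

lemma smode_upd:
  assumes "n < length u"
  shows "smode d n X U (u[n:=i]) = (\<Sum>r<d. X (u[n:=r]) * U i r)"
  unfolding smode_def using assms by simp

lemma smode_inner:
  assumes n: "n < length D" and d: "D!n = d"
    and orth: "\<And>a b. a<d \<Longrightarrow> b<d \<Longrightarrow> (\<Sum>i<e. cnj (U i a) * U i b) = (if a = b then 1 else 0)"
  shows "tinner (D[n:=e]) (smode d n X U) (smode d n Y U) = tinner D X Y"
proof -
  have n': "n < length (D[n:=e])" using n by simp
  have "tinner (D[n:=e]) (smode d n X U) (smode d n Y U)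
      = (\<Sum>u\<in>tidx (D[n:=1]). \<Sum>i<e. smode d n X U (u[n:=i]) * cnj (smode d n Y U (u[n:=i])))"
    unfolding tinner_def using tidx_split[OF n'] n by simp
  also have "\<dots> = (\<Sum>u\<in>tidx (D[n:=1]). \<Sum>i<e. (\<Sum>r<d. U i r * X (u[n:=r])) * cnj (\<Sum>r<d. U i r * Y (u[n:=r])))"
  proof (intro sum.cong refl)
    fix u i assume u: "u \<in> tidx (D[n:=1])"
    hence "n < length u" using tidx_length[OF u] n by simp
    thus "smode d n X U (u[n:=i]) * cnj (smode d n Y U (u[n:=i])) = (\<Sum>r<d. U i r * X (u[n:=r])) * cnj (\<Sum>r<d. U i r * Y (u[n:=r]))"
      by (simp add: smode_upd mult.commute)
  qed
  also have "\<dots> = (\<Sum>u\<in>tidx (D[n:=1]). \<Sum>r<d. X (u[n:=r]) * cnj (Y (u[n:=r])))"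
    by (intro sum.cong refl parseval_c2) (auto simp: orth)
  also have "\<dots> = tinner D X Y"
    unfolding tinner_def using tidx_split[OF n, of "\<lambda>is. X is * cnj (Y is)"] d by simp
  finally show ?thesis .
qed

lemma smode_nrm:
  assumes n: "n < length D" and d: "D!n = d"
    and orth: "\<And>a b. a<d \<Longrightarrow> b<d \<Longrightarrow> (\<Sum>i<e. cnj (U i a) * U i b) = (if a = b then 1 else 0)"
  shows "nrm (D[n:=e]) (smode d n X U) = nrm D X"
  using smode_inner[OF n d orth, of X X] by (metis nrm_inner of_real_eq_iff)

lemma smode_contract:
  assumes n: "n < length D" and d: "D!n = d"
    and orth: "\<And>a b. a<e \<Longrightarrow> b<e \<Longrightarrow> (\<Sum>i<d. cnj (W i a) * W i b) = (if a = b then 1 else 0)"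
  shows "nrm (D[n:=e]) (smode d n X (\<lambda>i s. cnj (W s i))) \<le> nrm D X"
proof -
  have n': "n < length (D[n:=e])" using n by simp
  have "nrm (D[n:=e]) (smode d n X (\<lambda>i s. cnj (W s i)))
      = (\<Sum>u\<in>tidx (D[n:=1]). \<Sum>i<e. (cmod (smode d n X (\<lambda>i s. cnj (W s i)) (u[n:=i])))\<^sup>2)"
    unfolding nrm_def using tidx_split[OF n'] n by simp
  also have "\<dots> = (\<Sum>u\<in>tidx (D[n:=1]). \<Sum>i<e. (cmod (\<Sum>s<d. cnj (W s i) * X (u[n:=s])))\<^sup>2)"
  proof (intro sum.cong refl)
    fix u i assume u: "u \<in> tidx (D[n:=1])"
    hence "n < length u" using tidx_length[OF u] n by simp
    thus "(cmod (smode d n X (\<lambda>i s. cnj (W s i)) (u[n:=i])))\<^sup>2 = (cmod (\<Sum>s<d. cnj (W s i) * X (u[n:=s])))\<^sup>2"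
      by (simp add: smode_upd mult.commute)
  qed
  also have "\<dots> \<le> (\<Sum>u\<in>tidx (D[n:=1]). \<Sum>s<d. (cmod (X (u[n:=s])))\<^sup>2)"
    by (intro sum_mono bessel) (auto simp: orth)
  also have "\<dots> = nrm D X"
    unfolding nrm_def using tidx_split[OF n, of "\<lambda>is. (cmod (X is))\<^sup>2"] d by simp
  finally show ?thesis .
qed

lemma smode_adj:
  assumes n: "n < length D" and d: "D!n = d"
  shows "tinner (D[n:=e]) (smode d n X U) Y = tinner D X (smode e n Y (\<lambda>i s. cnj (U s i)))"
proof -
  have n': "n < length (D[n:=e])" using n by simp
  have "tinner (D[n:=e]) (smode d n X U) Y
      = (\<Sum>u\<in>tidx (D[n:=1]). \<Sum>i<e. smode d n X U (u[n:=i]) * cnj (Y (u[n:=i])))"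
    unfolding tinner_def using tidx_split[OF n'] n by simp
  also have "\<dots> = (\<Sum>u\<in>tidx (D[n:=1]). \<Sum>r<d. X (u[n:=r]) * cnj (smode e n Y (\<lambda>i s. cnj (U s i)) (u[n:=r])))"
  proof (rule sum.cong[OF refl])
    fix u assume u: "u \<in> tidx (D[n:=1])"
    hence nu: "n < length u" using tidx_length[OF u] n by simp
    show "(\<Sum>i<e. smode d n X U (u[n:=i]) * cnj (Y (u[n:=i]))) = (\<Sum>r<d. X (u[n:=r]) * cnj (smode e n Y (\<lambda>i s. cnj (U s i)) (u[n:=r])))"
      using nu by (simp add: smode_upd sum_distrib_left sum_distrib_right mult_ac sum.swap[of _ "{..<e}"])
  qed
  also have "\<dots> = tinner D X (smode e n Y (\<lambda>i s. cnj (U s i)))"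
    unfolding tinner_def using tidx_split[OF n, of "\<lambda>is. X is * cnj (smode e n Y (\<lambda>i s. cnj (U s i)) is)"] d by simp
  finally show ?thesis .
qed

lemma upd_upd_id: "n < length D \<Longrightarrow> (D[n := x])[n := D!n] = D"
  by simp

lemma smm_inner:
  assumes len: "length Dst = length Den" and lm: "lo + m \<le> length Dst"
    and out: "\<And>j. j < length Dst \<Longrightarrow> j < lo \<or> lo + m \<le> j \<Longrightarrow> Dst!j = Den!j"
    and dim: "\<And>k. k < m \<Longrightarrow> Dst!(lo+k) = D!(lo+k)"
    and orth: "\<And>k a b. k < m \<Longrightarrow> a < D!(lo+k) \<Longrightarrow> b < D!(lo+k) \<Longrightarrow>
        (\<Sum>i<Den!(lo+k). cnj (M (lo+k) i a) * M (lo+k) i b) = (if a = b then 1 else 0)"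
  shows "tinner Den (smm D X M lo m) (smm D Y M lo m) = tinner Dst X Y"
  using len lm out dim orth
proof (induction m arbitrary: Den)
  case 0
  hence "Dst = Den" by (intro nth_equalityI) (auto, metis linorder_not_le)
  thus ?case by simp
next
  case (Suc m)
  define Dmid where "Dmid = Den[lo+m := Dst!(lo+m)]"
  have lmid: "length Dst = length Dmid" using Suc.prems unfolding Dmid_def by simp
  have IH: "tinner Dmid (smm D X M lo m) (smm D Y M lo m) = tinner Dst X Y"
  proof (rule Suc.IH)
    show "length Dst = length Dmid" by (rule lmid)
    show "lo + m \<le> length Dst" using Suc.prems by simp
    show "Dst ! j = Dmid ! j" if "j < length Dst" "j < lo \<or> lo + m \<le> j" for j
    proof (cases "j = lo + m")
      case True thus ?thesis unfolding Dmid_def using Suc.prems that by simp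
    next
      case False
      hence "j < lo \<or> lo + Suc m \<le> j" using that by auto
      thus ?thesis unfolding Dmid_def using Suc.prems(3)[of j] that False by simp
    qed
    show "Dst ! (lo + k) = D ! (lo + k)" if "k < m" for k using Suc.prems(4)[of k] that by simp
    show "(\<Sum>i<Dmid ! (lo + k). cnj (M (lo + k) i a) * M (lo + k) i b) = (if a = b then 1 else 0)"
      if "k < m" "a < D ! (lo + k)" "b < D ! (lo + k)" for k a b
      using Suc.prems(5)[of k a b] that unfolding Dmid_def by simp
  qed
  have n: "lo + m < length Dmid" using Suc.prems lmid by simp
  have d: "Dmid ! (lo + m) = D ! (lo + m)" unfolding Dmid_def using Suc.prems(1,2) Suc.prems(4)[of m] by simp
  have DD: "Dmid[lo+m := Den!(lo+m)] = Den" unfolding Dmid_def by simp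
  have "tinner Den (smm D X M lo (Suc m)) (smm D Y M lo (Suc m))
      = tinner (Dmid[lo+m := Den!(lo+m)]) (smode (D!(lo+m)) (lo+m) (smm D X M lo m) (M (lo+m))) (smode (D!(lo+m)) (lo+m) (smm D Y M lo m) (M (lo+m)))"
    using DD by simp
  also have "\<dots> = tinner Dmid (smm D X M lo m) (smm D Y M lo m)"
    by (rule smode_inner[OF n d]) (use Suc.prems(5)[of m] in auto)
  finally show ?case using IH by simp
qed

lemma smm_contract:
  assumes len: "length Dst = length Den" and lm: "lo + m \<le> length Dst"
    and out: "\<And>j. j < length Dst \<Longrightarrow> j < lo \<or> lo + m \<le> j \<Longrightarrow> Dst!j = Den!j"
    and dim: "\<And>k. k < m \<Longrightarrow> Dst!(lo+k) = D!(lo+k)"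
    and orth: "\<And>k a b. k < m \<Longrightarrow> a < Den!(lo+k) \<Longrightarrow> b < Den!(lo+k) \<Longrightarrow>
        (\<Sum>i<D!(lo+k). cnj (W (lo+k) i a) * W (lo+k) i b) = (if a = b then 1 else 0)"
  shows "nrm Den (smm D X (\<lambda>k i s. cnj (W k s i)) lo m) \<le> nrm Dst X"
  using len lm out dim orth
proof (induction m arbitrary: Den)
  case 0
  hence "Dst = Den" by (intro nth_equalityI) (auto, metis linorder_not_le)
  thus ?case by simp
next
  case (Suc m)
  define Dmid where "Dmid = Den[lo+m := Dst!(lo+m)]"
  have lmid: "length Dst = length Dmid" using Suc.prems unfolding Dmid_def by simp
  have IH: "nrm Dmid (smm D X (\<lambda>k i s. cnj (W k s i)) lo m) \<le> nrm Dst X"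
  proof (rule Suc.IH)
    show "length Dst = length Dmid" by (rule lmid)
    show "lo + m \<le> length Dst" using Suc.prems by simp
    show "Dst ! j = Dmid ! j" if "j < length Dst" "j < lo \<or> lo + m \<le> j" for j
    proof (cases "j = lo + m")
      case True thus ?thesis unfolding Dmid_def using Suc.prems that by simp
    next
      case False
      hence "j < lo \<or> lo + Suc m \<le> j" using that by auto
      thus ?thesis unfolding Dmid_def using Suc.prems(3)[of j] that False by simp
    qed
    show "Dst ! (lo + k) = D ! (lo + k)" if "k < m" for k using Suc.prems(4)[of k] that by simp
    show "(\<Sum>i<D ! (lo + k). cnj (W (lo + k) i a) * W (lo + k) i b) = (if a = b then 1 else 0)"
      if "k < m" "a < Dmid ! (lo + k)" "b < Dmid ! (lo + k)" for k a b
      using Suc.prems(5)[of k a b] that unfolding Dmid_def by simp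
  qed
  have n: "lo + m < length Dmid" using Suc.prems lmid by simp
  have d: "Dmid ! (lo + m) = D ! (lo + m)" unfolding Dmid_def using Suc.prems(1,2) Suc.prems(4)[of m] by simp
  have DD: "Dmid[lo+m := Den!(lo+m)] = Den" unfolding Dmid_def by simp
  have "nrm Den (smm D X (\<lambda>k i s. cnj (W k s i)) lo (Suc m))
      = nrm (Dmid[lo+m := Den!(lo+m)]) (smode (D!(lo+m)) (lo+m) (smm D X (\<lambda>k i s. cnj (W k s i)) lo m) (\<lambda>i s. cnj (W (lo+m) s i)))"
    using DD by simp
  also have "\<dots> \<le> nrm Dmid (smm D X (\<lambda>k i s. cnj (W k s i)) lo m)"
    by (rule smode_contract[OF n d]) (use Suc.prems(5)[of m] in auto)
  finally show ?case using IH by simp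
qed




lemma inner_cnj: "tinner D Y X = cnj (tinner D X Y)"
  unfolding tinner_def by (simp add: mult.commute)

lemma nrm_add:
  "nrm D (\<lambda>is. X is + Y is) = nrm D X + nrm D Y + 2 * Re (tinner D X Y)"
proof -
  have "complex_of_real (nrm D (\<lambda>is. X is + Y is)) = tinner D X X + tinner D Y Y + tinner D X Y + cnj (tinner D X Y)"
    unfolding nrm_inner by (simp add: tinner_def algebra_simps sum.distrib)
  also have "\<dots> = complex_of_real (nrm D X + nrm D Y + 2 * Re (tinner D X Y))"
    by (simp add: nrm_inner[symmetric] complex_add_cnj)
  finally show ?thesis using of_real_eq_iff by blast
qed

lemma nrm_cong: "(\<And>is. is \<in> tidx D \<Longrightarrow> X is = Y is) \<Longrightarrow> nrm D X = nrm D Y"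
  unfolding nrm_def by (intro sum.cong) auto

lemma inner_cong: "(\<And>is. is \<in> tidx D \<Longrightarrow> Y is = Y' is) \<Longrightarrow> tinner D X Y = tinner D X Y'"
  unfolding tinner_def by (intro sum.cong) auto

lemma dims_after_length: "length (dims_after I I' n) = length I"
  unfolding dims_after_def by simp

lemma dims_after_nth: "k < length I \<Longrightarrow> dims_after I I' n ! k = (if k < n then I'!k else I!k)"
  unfolding dims_after_def by simp

lemma dims_after_upd: "n < length I \<Longrightarrow> (dims_after I I' (Suc n))[n := I!n] = dims_after I I' n"
  by (intro nth_equalityI) (auto simp: dims_after_length dims_after_nth nth_list_update)

lemma dims_after_upd2: "n < length I \<Longrightarrow> (dims_after I I' n)[n := I'!n] = dims_after I I' (Suc n)"
  by (intro nth_equalityI) (auto simp: dims_after_length dims_after_nth nth_list_update)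

lemma dims_after_0: "dims_after I I' 0 = I"
  by (intro nth_equalityI) (auto simp: dims_after_length dims_after_nth)

lemma dims_after_N: "length I' = length I \<Longrightarrow> dims_after I I' (length I) = I'"
  by (intro nth_equalityI) (auto simp: dims_after_length dims_after_nth)

lemma nrm_proj_unfold:
  assumes nl: "n < length D"
  shows "nrm D (\<lambda>is. X is - smode (D!n) n X (\<lambda>i s. \<Sum>l<r. W i l * cnj (W s l)) is)
    = (\<Sum>i<D!n. \<Sum>j<unfold_cols D n. (cmod (X (unfold_idx D n i j) - (\<Sum>l<r. W i l * (\<Sum>s<D!n. cnj (W s l) * X (unfold_idx D n s j)))))\<^sup>2)"
proof -
  have "nrm D (\<lambda>is. X is - smode (D!n) n X (\<lambda>i s. \<Sum>l<r. W i l * cnj (W s l)) is)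
    = (\<Sum>i<D!n. \<Sum>j<unfold_cols D n. (cmod (X (unfold_idx D n i j) - smode (D!n) n X (\<lambda>i s. \<Sum>l<r. W i l * cnj (W s l)) (unfold_idx D n i j)))\<^sup>2)"
    unfolding nrm_def by (rule unfold_sum[OF nl])
  also have "\<dots> = (\<Sum>i<D!n. \<Sum>j<unfold_cols D n. (cmod (X (unfold_idx D n i j) - (\<Sum>l<r. W i l * (\<Sum>s<D!n. cnj (W s l) * X (unfold_idx D n s j)))))\<^sup>2)"
  proof (intro sum.cong refl)
    fix i j
    have "smode (D!n) n X (\<lambda>i s. \<Sum>l<r. W i l * cnj (W s l)) (unfold_idx D n i j)
        = (\<Sum>l<r. W i l * (\<Sum>s<D!n. cnj (W s l) * X (unfold_idx D n s j)))"
      unfolding smode_def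
      by (simp add: unfold_idx_upd[OF nl] unfold_idx_nth[OF nl] sum_distrib_left sum_distrib_right mult_ac sum.swap[of _ "{..<r}"])
    thus "(cmod (X (unfold_idx D n i j) - smode (D!n) n X (\<lambda>i s. \<Sum>l<r. W i l * cnj (W s l)) (unfold_idx D n i j)))\<^sup>2
      = (cmod (X (unfold_idx D n i j) - (\<Sum>l<r. W i l * (\<Sum>s<D!n. cnj (W s l) * X (unfold_idx D n s j)))))\<^sup>2"
      by simp
  qed
  finally show ?thesis .
qed

lemma smm_factor:
  assumes n: "n < N"
  shows "smm D X M 0 N = smode (D!n) n (smm D (smm D X M (Suc n) (N - Suc n)) M 0 n) (M n)"
  using smm_split[of D X M 0 "Suc n" "N - Suc n"] n by simp

lemma eckart_tensor:
  assumes n: "n < N" and lI: "length I = N" and lI': "length I' = N"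
    and svda: "is_svd (I!n) (unfold_cols I n) (\<lambda>i j. a (unfold_idx I n i j)) uA sA vA"
    and orth: "\<And>p q. p < I'!n \<Longrightarrow> q < I'!n \<Longrightarrow> (\<Sum>l<I!n. cnj (w n l p) * w n l q) = (if p = q then 1 else 0)"
  shows "(\<Sum>i\<in>{I'!n..<min (I!n) (unfold_cols I n)}. (cmod (sA i i))\<^sup>2) \<le> nrm I (\<lambda>is. a is - smm I' \<sigma> w 0 N is)"
proof -
  define Z where "Z = smm I' (smm I' \<sigma> w (Suc n) (N - Suc n)) w 0 n"
  have nI: "n < length I" using n lI by simp
  have "(\<Sum>i\<in>{I'!n..<min (I!n) (unfold_cols I n)}. (cmod (sA i i))\<^sup>2)
    \<le> (\<Sum>i<I!n. \<Sum>j<unfold_cols I n. (cmod (a (unfold_idx I n i j) - (\<Sum>l<I'!n. w n i l * Z (unfold_idx I n l j))))\<^sup>2)"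
    by (rule svd_eckart[OF svda]) (rule orth)
  also have "\<dots> = nrm I (\<lambda>is. a is - smode (I'!n) n Z (w n) is)"
    unfolding nrm_def
  proof (subst unfold_sum[OF nI], intro sum.cong refl)
    fix i j
    show "(cmod (a (unfold_idx I n i j) - (\<Sum>l<I'!n. w n i l * Z (unfold_idx I n l j))))\<^sup>2
      = (cmod (a (unfold_idx I n i j) - smode (I'!n) n Z (w n) (unfold_idx I n i j)))\<^sup>2"
      unfolding smode_def by (simp add: unfold_idx_upd[OF nI] unfold_idx_nth[OF nI] mult.commute)
  qed
  also have "smode (I'!n) n Z (w n) = smm I' \<sigma> w 0 N"
    unfolding Z_def using smm_factor[OF n, of I' \<sigma> w] by simp
  finally show ?thesis .
qed

locale slice_setup =
  fixes N :: nat and I I' :: "nat list" and a :: "nat list \<Rightarrow> complex"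
    and uh :: "nat \<Rightarrow> nat \<Rightarrow> nat \<Rightarrow> complex"
    and u t v :: "nat \<Rightarrow> nat \<Rightarrow> nat \<Rightarrow> complex"
  assumes lenI: "length I = N" and lenI': "length I' = N"
    and I'le: "\<And>n. n<N \<Longrightarrow> I'!n \<le> I!n"
    and uh_u: "\<And>n i j. n<N \<Longrightarrow> i < I!n \<Longrightarrow> j < I'!n \<Longrightarrow> uh n i j = u n i j"
    and svd_y: "\<And>n. n<N \<Longrightarrow> is_svd (I!n) (unfold_cols (dims_after I I' n) n)
        (\<lambda>i j. smm I a (\<lambda>k i s. cnj (uh k s i)) 0 n (unfold_idx (dims_after I I' n) n i j)) (u n) (t n) (v n)"
begin

abbreviation "uH \<equiv> (\<lambda>k i s. cnj (uh k s i))"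
definition "y n = smm I a uH 0 n"
definition "z n = smm I' (y n) uh 0 n"
abbreviation "Dn n \<equiv> dims_after I I' n"
definition "dd n = (\<lambda>is. y n is - smode (I'!n) n (y (Suc n)) (uh n) is)"
definition "tlt n = (\<Sum>i\<in>{I'!n..<min (I!n) (unfold_cols (Dn n) n)}. (cmod (t n i i))\<^sup>2)"

lemma uh_orth: "n < N \<Longrightarrow> p < I'!n \<Longrightarrow> q < I'!n \<Longrightarrow> (\<Sum>i<I!n. cnj (uh n i p) * uh n i q) = (if p = q then 1 else 0)"
proof -
  assume n: "n < N" and ab: "p < I'!n" "q < I'!n"
  have "unitary_on (I!n) (u n)" using svd_y[OF n] unfolding is_svd_def by auto
  hence "(\<Sum>i<I!n. cnj (u n i p) * u n i q) = (if p = q then 1 else 0)"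
    using ab I'le[OF n] unfolding unitary_on_def by auto
  moreover have "(\<Sum>i<I!n. cnj (uh n i p) * uh n i q) = (\<Sum>i<I!n. cnj (u n i p) * u n i q)"
    by (intro sum.cong refl) (use uh_u[OF n] ab in auto)
  ultimately show ?thesis by simp
qed

lemma y_Suc: "y (Suc n) = smode (I!n) n (y n) (uH n)"
  unfolding y_def by simp

lemma z_diff: "(\<lambda>is. z n is - z (Suc n) is) = smm I' (dd n) uh 0 n"
proof -
  have "z (Suc n) = smm I' (smode (I'!n) n (y (Suc n)) (uh n)) uh 0 n"
    unfolding z_def by (simp add: smode_smm_comm)
  thus ?thesis unfolding z_def dd_def by (simp add: smm_diff)
qed

lemma z_rest:
  assumes n: "n < N"
  shows "(\<lambda>is. z (Suc n) is - z N is) = smm I' (smode (I'!n) n (\<lambda>is. y (Suc n) is - smm I' (y N) uh (Suc n) (N - Suc n) is) (uh n)) uh 0 n"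
proof -
  have "z N = smm I' (smm I' (y N) uh (Suc n) (N - Suc n)) uh 0 (Suc n)"
    unfolding z_def using smm_split[of I' "y N" uh 0 "Suc n" "N - Suc n"] n by simp
  hence "(\<lambda>is. z (Suc n) is - z N is) = smm I' (\<lambda>is. y (Suc n) is - smm I' (y N) uh (Suc n) (N - Suc n) is) uh 0 (Suc n)"
    unfolding z_def by (simp add: smm_diff)
  also have "\<dots> = smm I' (smode (I'!n) n (\<lambda>is. y (Suc n) is - smm I' (y N) uh (Suc n) (N - Suc n) is) (uh n)) uh 0 n"
    by (simp add: smode_smm_comm)
  finally show ?thesis .
qed

lemma smm_iso_inner:
  assumes n: "n \<le> N"
  shows "tinner I (smm I' X uh 0 n) (smm I' Y uh 0 n) = tinner (Dn n) X Y"
proof (rule smm_inner)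
  show "length (Dn n) = length I" by (simp add: dims_after_length)
  show "0 + n \<le> length (Dn n)" using n lenI by (simp add: dims_after_length)
  show "Dn n ! j = I ! j" if "j < length (Dn n)" "j < 0 \<or> 0 + n \<le> j" for j
    using that by (simp add: dims_after_length dims_after_nth)
  show "Dn n ! (0 + k) = I' ! (0 + k)" if "k < n" for k
    using that n lenI by (simp add: dims_after_nth)
  show "(\<Sum>i<I ! (0 + k). cnj (uh (0 + k) i p) * uh (0 + k) i q) = (if p = q then 1 else 0)"
    if "k < n" "p < I' ! (0 + k)" "q < I' ! (0 + k)" for k p q
    using uh_orth[of k p q] that n by simp
qed

lemma dd_proj_zero:
  assumes n: "n < N" and xs: "xs \<in> tidx (Dn (Suc n))"
  shows "smode (I!n) n (dd n) (uH n) xs = 0"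
proof -
  have l: "n < length xs" using tidx_length[OF xs] n lenI by (simp add: dims_after_length)
  have isn: "xs ! n < I'!n" using xs n lenI unfolding tidx_def by (auto simp: dims_after_length dims_after_nth)
  have "smode (I!n) n (dd n) (uH n) xs = y (Suc n) xs - smode (I!n) n (smode (I'!n) n (y (Suc n)) (uh n)) (uH n) xs"
    unfolding dd_def smode_diff y_Suc by simp
  also have "smode (I!n) n (smode (I'!n) n (y (Suc n)) (uh n)) (uH n) xs
      = smode (I'!n) n (y (Suc n)) (\<lambda>i s. \<Sum>r<I!n. uH n i r * uh n r s) xs"
    by (rule smode_smode[OF l])
  also have "\<dots> = (\<Sum>s<I'!n. y (Suc n) (xs[n:=s]) * (if xs!n = s then 1 else 0))"
    unfolding smode_def
  proof (rule sum.cong[OF refl])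
    fix s assume "s \<in> {..<I'!n}"
    hence "(\<Sum>r<I!n. cnj (uh n r (xs!n)) * uh n r s) = (if xs!n = s then 1 else 0)"
      using uh_orth[OF n isn, of s] by simp
    thus "y (Suc n) (xs[n := s]) * (\<Sum>r<I ! n. uH n (xs ! n) r * uh n r s) = y (Suc n) (xs[n := s]) * (if xs ! n = s then 1 else 0)"
      by simp
  qed
  also have "\<dots> = y (Suc n) xs"
    using isn by (simp add: if_distrib[of "\<lambda>x. _ * x"] cong: if_cong)
  finally show ?thesis by simp
qed

lemma inner_zero:
  assumes n: "n < N"
  shows "tinner I (\<lambda>is. z n is - z (Suc n) is) (\<lambda>is. z (Suc n) is - z N is) = 0"
proof -
  define Q where "Q = (\<lambda>is. y (Suc n) is - smm I' (y N) uh (Suc n) (N - Suc n) is)"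
  have "tinner I (\<lambda>is. z n is - z (Suc n) is) (\<lambda>is. z (Suc n) is - z N is)
      = tinner I (smm I' (dd n) uh 0 n) (smm I' (smode (I'!n) n Q (uh n)) uh 0 n)"
    unfolding z_diff z_rest[OF n] Q_def ..
  also have "\<dots> = tinner (Dn n) (dd n) (smode (I'!n) n Q (uh n))"
    using n by (simp add: smm_iso_inner)
  also have "\<dots> = cnj (tinner ((Dn (Suc n))[n := I!n]) (smode (I'!n) n Q (uh n)) (dd n))"
    using n lenI by (simp add: dims_after_upd inner_cnj[of _ "dd n"])
  also have "tinner ((Dn (Suc n))[n := I!n]) (smode (I'!n) n Q (uh n)) (dd n)
      = tinner (Dn (Suc n)) Q (smode (I!n) n (dd n) (uH n))"
    by (rule smode_adj) (use n lenI in \<open>auto simp: dims_after_length dims_after_nth\<close>)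
  also have "\<dots> = tinner (Dn (Suc n)) Q (\<lambda>is. 0)"
    by (rule inner_cong) (use dd_proj_zero[OF n] in auto)
  also have "\<dots> = 0" unfolding tinner_def by simp
  finally show ?thesis by simp
qed

lemma z0: "z 0 = a" unfolding z_def y_def by simp

lemma smm_iso_nrm:
  assumes n: "n \<le> N"
  shows "nrm I (smm I' X uh 0 n) = nrm (Dn n) X"
  using smm_iso_inner[OF n, of X X] by (metis nrm_inner of_real_eq_iff)

lemma Dn_n: "n < N \<Longrightarrow> Dn n ! n = I ! n"
  using lenI by (simp add: dims_after_nth)

lemma Dn_len: "length (Dn n) = N"
  using lenI by (simp add: dims_after_length)

lemma nrm_dd:
  assumes n: "n < N"
  shows "nrm (Dn n) (dd n) = tlt n"
proof -
  have nl: "n < length (Dn n)" using n Dn_len by simp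
  define C where "C = unfold_cols (Dn n) n"
  define Y where "Y i j = y n (unfold_idx (Dn n) n i j)" for i j
  have "nrm (Dn n) (dd n) = (\<Sum>i<I!n. \<Sum>j<C. (cmod (dd n (unfold_idx (Dn n) n i j)))\<^sup>2)"
    unfolding nrm_def C_def using unfold_sum[OF nl] Dn_n[OF n] by simp
  also have "\<dots> = (\<Sum>i<I!n. \<Sum>j<C. (cmod (Y i j - (\<Sum>l<I'!n. u n i l * (\<Sum>s<I!n. cnj (u n s l) * Y s j))))\<^sup>2)"
  proof (intro sum.cong refl)
    fix i j assume i: "i \<in> {..<I!n}" and j: "j \<in> {..<C}"
    have "smode (I'!n) n (y (Suc n)) (uh n) (unfold_idx (Dn n) n i j)
        = (\<Sum>l<I'!n. uh n i l * (\<Sum>s<I!n. cnj (uh n s l) * Y s j))"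
      unfolding smode_def y_Suc Y_def
      by (simp add: unfold_idx_upd[OF nl] unfold_idx_nth[OF nl] sum_distrib_left mult_ac)
    also have "\<dots> = (\<Sum>l<I'!n. u n i l * (\<Sum>s<I!n. cnj (u n s l) * Y s j))"
      using i by (intro sum.cong refl) (simp_all add: uh_u[OF n])
    finally show "(cmod (dd n (unfold_idx (Dn n) n i j)))\<^sup>2 = (cmod (Y i j - (\<Sum>l<I'!n. u n i l * (\<Sum>s<I!n. cnj (u n s l) * Y s j))))\<^sup>2"
      unfolding dd_def Y_def by simp
  qed
  also have "\<dots> = tlt n"
    unfolding tlt_def C_def Y_def
    using svd_trunc[OF svd_y[OF n] I'le[OF n]] by (simp add: y_def)
  finally show ?thesis .
qed

lemma nrm_zero: "nrm D (\<lambda>is. 0) = 0" unfolding nrm_def by simp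

lemma pyth:
  assumes k: "k \<le> N"
  shows "nrm I (\<lambda>is. z (N-k) is - z N is) = (\<Sum>m\<in>{N-k..<N}. tlt m)"
  using k
proof (induction k)
  case 0 thus ?case by (simp add: nrm_zero)
next
  case (Suc k)
  define n where "n = N - Suc k"
  have n: "n < N" and sn: "Suc n = N - k" using Suc.prems unfolding n_def by auto
  have "nrm I (\<lambda>is. z n is - z N is)
      = nrm I (\<lambda>is. (z n is - z (Suc n) is) + (z (Suc n) is - z N is))" by simp
  also have "\<dots> = nrm I (\<lambda>is. z n is - z (Suc n) is) + nrm I (\<lambda>is. z (Suc n) is - z N is)"
    using nrm_add[of I "\<lambda>is. z n is - z (Suc n) is" "\<lambda>is. z (Suc n) is - z N is"] inner_zero[OF n] by simp
  also have "nrm I (\<lambda>is. z n is - z (Suc n) is) = tlt n"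
    unfolding z_diff using n by (simp add: smm_iso_nrm nrm_dd)
  also have "nrm I (\<lambda>is. z (Suc n) is - z N is) = (\<Sum>m\<in>{Suc n..<N}. tlt m)"
    using Suc sn by simp
  also have "tlt n + (\<Sum>m\<in>{Suc n..<N}. tlt m) = (\<Sum>m\<in>{n..<N}. tlt m)"
    using n by (simp add: sum.atLeast_Suc_lessThan)
  finally show ?case unfolding n_def .
qed

lemma tlt_le:
  assumes n: "n < N"
    and svda: "is_svd (I!n) (unfold_cols I n) (\<lambda>i j. a (unfold_idx I n i j)) uA sA vA"
  shows "tlt n \<le> (\<Sum>i\<in>{I'!n..<min (I!n) (unfold_cols I n)}. (cmod (sA i i))\<^sup>2)"
proof -
  define r where "r = I'!n"
  define P where "P = (\<lambda>i s. \<Sum>l<r. uA i l * cnj (uA s l))"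
  have nl: "n < length (Dn n)" using n Dn_len by simp
  have nI: "n < length I" using n lenI by simp
  have uA: "unitary_on (I!n) uA" using svda unfolding is_svd_def by auto
  have orth: "\<And>p q. p<r \<Longrightarrow> q<r \<Longrightarrow> (\<Sum>i<I!n. cnj (uA i p) * uA i q) = (if p = q then 1 else 0)"
    using uA I'le[OF n] unfolding unitary_on_def r_def by auto
  have "tlt n \<le> (\<Sum>i<I!n. \<Sum>j<unfold_cols (Dn n) n. (cmod (y n (unfold_idx (Dn n) n i j) - (\<Sum>l<r. uA i l * (\<Sum>s<I!n. cnj (uA s l) * y n (unfold_idx (Dn n) n s j)))))\<^sup>2)"
    unfolding tlt_def r_def using svd_eckart[OF svd_y[OF n], of "I'!n" uA "\<lambda>l j. \<Sum>s<I!n. cnj (uA s l) * y n (unfold_idx (Dn n) n s j)"] orth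
    by (simp add: y_def r_def)
  also have "\<dots> = nrm (Dn n) (\<lambda>is. y n is - smode (I!n) n (y n) P is)"
    unfolding P_def using nrm_proj_unfold[OF nl, where X = "y n" and r = r and W = uA] Dn_n[OF n] by simp
  also have "(\<lambda>is. y n is - smode (I!n) n (y n) P is) = smm I (\<lambda>is. a is - smode (I!n) n a P is) uH 0 n"
    unfolding y_def by (simp add: smm_diff smode_smm_comm)
  also have "nrm (Dn n) (smm I (\<lambda>is. a is - smode (I!n) n a P is) uH 0 n) \<le> nrm I (\<lambda>is. a is - smode (I!n) n a P is)"
  proof (rule smm_contract)
    show "length I = length (Dn n)" by (simp add: dims_after_length)
    show "0 + n \<le> length I" using n lenI by simp
    show "I ! j = Dn n ! j" if "j < length I" "j < 0 \<or> 0 + n \<le> j" for j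
      using that by (simp add: dims_after_nth)
    show "I ! (0 + k) = I ! (0 + k)" for k by simp
    show "(\<Sum>i<I ! (0 + k). cnj (uh (0 + k) i p) * uh (0 + k) i q) = (if p = q then 1 else 0)"
      if "k < n" "p < Dn n ! (0 + k)" "q < Dn n ! (0 + k)" for k p q
      using that uh_orth[of k p q] n lenI by (simp add: dims_after_nth)
  qed
  also have "nrm I (\<lambda>is. a is - smode (I!n) n a P is)
    = (\<Sum>i<I!n. \<Sum>j<unfold_cols I n. (cmod (a (unfold_idx I n i j) - (\<Sum>l<r. uA i l * (\<Sum>s<I!n. cnj (uA s l) * a (unfold_idx I n s j)))))\<^sup>2)"
    unfolding P_def by (rule nrm_proj_unfold[OF nI])
  also have "\<dots> = (\<Sum>i\<in>{I'!n..<min (I!n) (unfold_cols I n)}. (cmod (sA i i))\<^sup>2)"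
    unfolding r_def by (rule svd_trunc[OF svda I'le[OF n]])
  finally show ?thesis .
qed

lemma main_pyth: "nrm I (\<lambda>is. a is - z N is) = (\<Sum>m<N. tlt m)"
  using pyth[of N] z0 by (simp add: atLeast0LessThan)

end




lemma svd_diag_zero:
  assumes svd: "is_svd I0 J0 A U S V" and z: "S i i = 0" and im: "i \<le> m" and mK: "m < min I0 J0"
  shows "S m m = 0"
  using im mK
proof (induction m)
  case 0 thus ?case using z by simp
next
  case (Suc m)
  show ?case
  proof (cases "i = Suc m")
    case True thus ?thesis using z by simp
  next
    case False
    hence "i \<le> m" using Suc.prems by simp
    hence zm: "S m m = 0" using Suc by simp
    have "Re (S (Suc m) (Suc m)) \<le> Re (S m m)" "0 \<le> Re (S (Suc m) (Suc m))" "S (Suc m) (Suc m) \<in> \<real>"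
      using svd Suc.prems unfolding is_svd_def by auto
    thus ?thesis using zm by (metis Re_complex_of_real Reals_cases antisym of_real_0 zero_complex.simps(1))
  qed
qed

lemma norm_vec_sq: "(norm (x :: complex^'p))\<^sup>2 = (\<Sum>k\<in>UNIV. (cmod (x$k))\<^sup>2)"
  by (simp add: norm_vec_def L2_set_def sum_nonneg)

locale Lsetup =
  fixes L W :: "complex^'p^'p" and c :: complex
  assumes c0: "c \<noteq> 0" and uW: "unitary_mat W" and Ldef: "L = (\<chi> i j. c * W $ i $ j)"
begin

definition "B = (\<chi> i j. inverse c * cadj W $ i $ j)"

lemma W_ent: "(\<Sum>k\<in>UNIV. W $ i $ k * cadj W $ k $ j) = (if i = j then 1 else 0)"
             "(\<Sum>k\<in>UNIV. cadj W $ i $ k * W $ k $ j) = (if i = j then 1 else 0)"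
proof -
  have "(W ** cadj W) $ i $ j = mat 1 $ i $ j" "(cadj W ** W) $ i $ j = mat 1 $ i $ j"
    using uW unfolding unitary_mat_def by auto
  thus "(\<Sum>k\<in>UNIV. W $ i $ k * cadj W $ k $ j) = (if i = j then 1 else 0)"
       "(\<Sum>k\<in>UNIV. cadj W $ i $ k * W $ k $ j) = (if i = j then 1 else 0)"
    by (simp_all add: matrix_matrix_mult_def mat_def)
qed

lemma LB: "L ** B = mat 1" "B ** L = mat 1"
proof -
  have cc: "\<And>X. c * (inverse c * X) = X" "\<And>X. inverse c * (c * X) = X"
    using c0 by (simp_all add: mult.assoc[symmetric])
  show "L ** B = mat 1"
    unfolding Ldef B_def using c0
    by (simp add: vec_eq_iff matrix_matrix_mult_def mat_def W_ent(1)[symmetric] sum_distrib_left mult_ac cc)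
  show "B ** L = mat 1"
    unfolding Ldef B_def using c0
    by (simp add: vec_eq_iff matrix_matrix_mult_def mat_def W_ent(2)[symmetric] sum_distrib_left mult_ac cc)
qed

lemma Linv: "L ** matrix_inv L = mat 1" "matrix_inv L ** L = mat 1"
proof -
  have "\<exists>A'. L ** A' = mat 1 \<and> A' ** L = mat 1" using LB by blast
  hence "L ** matrix_inv L = mat 1 \<and> matrix_inv L ** L = mat 1"
    unfolding matrix_inv_def by (rule someI_ex)
  thus "L ** matrix_inv L = mat 1" "matrix_inv L ** L = mat 1" by auto
qed

lemma L_inv_app: "L *v (matrix_inv L *v x) = x"
  by (simp add: matrix_vector_mul_assoc Linv)

lemma L_inj: "L *v x = L *v y \<Longrightarrow> x = y"
  by (metis Linv(2) matrix_vector_mul_assoc matrix_vector_mul_lid)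

lemma L_tprod: "(L *v tprod L x y) $ k = (L *v x) $ k * (L *v y) $ k"
  unfolding tprod_def L_inv_app by simp

lemma L_tconj: "(L *v tconj L x) $ k = cnj ((L *v x) $ k)"
  unfolding tconj_def L_inv_app by simp

lemma L_tone: "(L *v tone L) $ k = 1"
  unfolding tone_def L_inv_app by simp

lemma L_zero: "(L *v 0) $ k = 0" by simp

lemma L_diff: "(L *v (x - y)) $ k = (L *v x) $ k - (L *v y) $ k"
  by (simp add: matrix_vector_mult_diff_distrib)

lemma L_sum: "(L *v sum f S) $ k = (\<Sum>s\<in>S. (L *v f s) $ k)"
proof -
  have "L *v sum f S = (\<Sum>s\<in>S. L *v f s)"
    by (rule linear_sum[OF matrix_vector_mul_linear])
  thus ?thesis by simp
qed

lemma L_norm: "(norm (L *v x))\<^sup>2 = (cmod c)\<^sup>2 * (norm x)\<^sup>2"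
proof -
  have "(norm (L *v x))\<^sup>2 = (\<Sum>i\<in>UNIV. (cmod (c * (\<Sum>j\<in>UNIV. W $ i $ j * x $ j)))\<^sup>2)"
    unfolding norm_vec_sq Ldef by (simp add: matrix_vector_mult_def sum_distrib_left[symmetric] mult.assoc)
  also have "\<dots> = (cmod c)\<^sup>2 * (\<Sum>i\<in>UNIV. (cmod (\<Sum>j\<in>UNIV. W $ i $ j * x $ j))\<^sup>2)"
    by (simp add: sum_distrib_left[symmetric] norm_mult power_mult_distrib)
  also have "(\<Sum>i\<in>UNIV. (cmod (\<Sum>j\<in>UNIV. W $ i $ j * x $ j))\<^sup>2) = (\<Sum>j\<in>UNIV. (cmod (x $ j))\<^sup>2)"
  proof (rule parseval_cols)
    fix p q :: 'p
    have "(\<Sum>i\<in>UNIV. cadj W $ p $ i * W $ i $ q) = (if p = q then 1 else 0)" by (rule W_ent(2))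
    thus "(\<Sum>i\<in>UNIV. cnj (W $ i $ p) * W $ i $ q) = (if p = q then 1 else 0)"
      by (simp add: cadj_def)
  qed auto
  finally show ?thesis by (simp add: norm_vec_sq)
qed

definition sl :: "'p \<Rightarrow> 'p ttensor \<Rightarrow> nat list \<Rightarrow> complex" where
  "sl k X = (\<lambda>is. (L *v X is) $ k)"

lemma sl_nmode: "sl k (nmode L d n X U) = smode d n (sl k X) (slice L U k)"
  unfolding sl_def nmode_def smode_def slice_def by (simp add: L_sum L_tprod)

lemma sl_mmodes: "sl k (mmodes L D X M m) = smm D (sl k X) (\<lambda>j. slice L (M j) k) 0 m"
  by (induction m) (simp_all add: sl_nmode)

lemma slice_tH: "slice L (tH L U) k = (\<lambda>i j. cnj (slice L U k j i))"
  unfolding slice_def tH_def by (simp add: L_tconj)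

lemma sl_diff: "sl k (\<lambda>is. X is - Y is) = (\<lambda>is. sl k X is - sl k Y is)"
  unfolding sl_def by (simp add: L_diff)

lemma slice_unfold: "slice L (unfold D n X) k = (\<lambda>i j. sl k X (unfold_idx D n i j))"
  unfolding slice_def unfold_def sl_def ..

lemma slice_tmatmul: "slice L (tmatmul L K A B') k i j = (\<Sum>l<K. slice L A k i l * slice L B' k l j)"
  unfolding slice_def tmatmul_def by (simp add: L_sum L_tprod)

lemma slice_tident: "slice L (tident L) k i j = (if i = j then 1 else 0)"
  unfolding slice_def tident_def by (simp add: L_tone)

lemma tnorm_sl: "(cmod c)\<^sup>2 * (tnorm D X)\<^sup>2 = (\<Sum>k\<in>UNIV. nrm D (sl k X))"
proof -
  have "(tnorm D X)\<^sup>2 = (\<Sum>is\<in>tidx D. (norm (X is))\<^sup>2)"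
    unfolding tnorm_def by (simp add: sum_nonneg)
  hence "(cmod c)\<^sup>2 * (tnorm D X)\<^sup>2 = (\<Sum>is\<in>tidx D. (norm (L *v X is))\<^sup>2)"
    by (simp add: L_norm sum_distrib_left)
  also have "\<dots> = (\<Sum>is\<in>tidx D. \<Sum>k\<in>UNIV. (cmod (sl k X is))\<^sup>2)"
    unfolding sl_def norm_vec_sq ..
  also have "\<dots> = (\<Sum>k\<in>UNIV. nrm D (sl k X))"
    unfolding nrm_def by (rule sum.swap)
  finally show ?thesis .
qed

lemma tube_zero: "(\<And>k. (L *v x) $ k = 0) \<Longrightarrow> x = 0"
  using L_inj[of x 0] by (simp add: vec_eq_iff)

lemma trank_suffix:
  assumes ts: "tsvd L I0 J0 A0 U0 S0 V0"
  shows "trank I0 J0 S0 \<le> min I0 J0"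
    and "\<And>i. trank I0 J0 S0 \<le> i \<Longrightarrow> i < min I0 J0 \<Longrightarrow> S0 i i = 0"
proof -
  define Z where "Z = {i. i < min I0 J0 \<and> S0 i i \<noteq> 0}"
  have R: "trank I0 J0 S0 = card Z" unfolding trank_def Z_def ..
  have Zsub: "Z \<subseteq> {..<min I0 J0}" unfolding Z_def by auto
  show "trank I0 J0 S0 \<le> min I0 J0"
    unfolding R using card_mono[OF _ Zsub] by simp
  fix i assume Ri: "trank I0 J0 S0 \<le> i" and iK: "i < min I0 J0"
  show "S0 i i = 0"
  proof (rule ccontr)
    assume nz: "S0 i i \<noteq> 0"
    have "{..i} \<subseteq> Z"
    proof
      fix j assume "j \<in> {..i}"
      hence ji: "j \<le> i" by simp
      have "S0 j j \<noteq> 0"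
      proof
        assume zj: "S0 j j = 0"
        have "\<And>k. (L *v S0 i i) $ k = 0"
        proof -
          fix k
          have svdk: "is_svd I0 J0 (slice L A0 k) (slice L U0 k) (slice L S0 k) (slice L V0 k)"
            using ts unfolding tsvd_def by auto
          have "slice L S0 k j j = 0" using zj unfolding slice_def by simp
          hence "slice L S0 k i i = 0" by (rule svd_diag_zero[OF svdk _ ji iK])
          thus "(L *v S0 i i) $ k = 0" unfolding slice_def .
        qed
        hence "S0 i i = 0" by (rule tube_zero)
        with nz show False by simp
      qed
      thus "j \<in> Z" unfolding Z_def using ji iK by simp
    qed
    hence "card {..i} \<le> card Z" by (intro card_mono) (auto simp: Z_def)
    thus False using R Ri by simp
  qed
qed

end




theorem theorem5p5:
  fixes L W :: "complex^'p^'p" and c :: complex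
    and N :: nat and I I' :: "nat list"
    and A :: "'p ttensor"
    and Uu Ss Vv :: "nat \<Rightarrow> 'p tmat"
    and UU SS VV :: "nat \<Rightarrow> 'p tmat"
    and S :: "'p ttensor" and Ws :: "nat \<Rightarrow> 'p tmat"
  defines "Uhat \<equiv> (\<lambda>n i j. if i < I ! n \<and> j < I' ! n then UU n i j else 0)"
  defines "R \<equiv> (\<lambda>n. trank (I ! n) (unfold_cols I n) (Ss n))"
  defines "Shat \<equiv> mmodes L I A (\<lambda>k. tH L (Uhat k)) N"
  defines "Ahat \<equiv> mmodes L I' Shat Uhat N"
  assumes "c \<noteq> 0" and "unitary_mat W" and "L = (\<chi> i j. c * W $ i $ j)"
    and "length I = N" and "length I' = N"
    and "\<And>n. n < N \<Longrightarrow> tsvd L (I ! n) (unfold_cols I n) (unfold I n A) (Uu n) (Ss n) (Vv n)"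
    and "\<And>n. n < N \<Longrightarrow> 1 \<le> I' ! n \<and> I' ! n \<le> R n"
    and "\<And>n. n < N \<Longrightarrow> tsvd L (I ! n) (unfold_cols (dims_after I I' n) n)
              (unfold (dims_after I I' n) n (mmodes L I A (\<lambda>k. tH L (Uhat k)) n))
              (UU n) (SS n) (VV n)"
    and "\<And>n. n < N \<Longrightarrow> \<forall>i < I' ! n. \<forall>j < I' ! n.
              tmatmul L (I ! n) (tH L (Ws n)) (Ws n) i j = tident L i j"
  shows "tnorm I (\<lambda>is. A is - Ahat is)
           \<le> sqrt (\<Sum>n<N. \<Sum>i\<in>{I' ! n..<R n}. (norm (Ss n i i))\<^sup>2)
       \<and> sqrt (\<Sum>n<N. \<Sum>i\<in>{I' ! n..<R n}. (norm (Ss n i i))\<^sup>2)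
           \<le> sqrt (real N) * tnorm I (\<lambda>is. A is - mmodes L I' S Ws N is)"
proof -
  note c0 = assms(5) and uW = assms(6) and Ldef = assms(7) and lI = assms(8) and lI' = assms(9)
    and tsA = assms(10) and bnd = assms(11) and tsY = assms(12) and orthW = assms(13)
  interpret Lsetup L W c using c0 uW Ldef by unfold_locales
  define K where "K n = min (I!n) (unfold_cols I n)" for n
  define G where "G n k = (\<Sum>i\<in>{I'!n..<K n}. (cmod (slice L (Ss n) k i i))\<^sup>2)" for n k
  define T where "T n = (\<Sum>i\<in>{I' ! n..<R n}. (norm (Ss n i i))\<^sup>2)" for n
  define X where "X = mmodes L I' S Ws N"
  have RK: "R n \<le> K n" if n: "n < N" for n
    unfolding R_def K_def using trank_suffix(1)[OF tsA[OF n]] .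
  have I'le: "I'!n \<le> I!n" if n: "n < N" for n
    using bnd[OF n] RK[OF n] unfolding K_def by simp
  have key1: "nrm I (sl k (\<lambda>is. A is - Ahat is)) \<le> (\<Sum>n<N. G n k)"
    and key2: "\<And>n. n < N \<Longrightarrow> G n k \<le> nrm I (sl k (\<lambda>is. A is - X is))" for k
  proof -
    interpret S: slice_setup N I I' "sl k A" "\<lambda>n. slice L (Uhat n) k" "\<lambda>n. slice L (UU n) k"
      "\<lambda>n. slice L (SS n) k" "\<lambda>n. slice L (VV n) k"
    proof
      show "length I = N" "length I' = N" by (fact lI, fact lI')
      show "I'!n \<le> I!n" if "n < N" for n using I'le[OF that] .
      show "slice L (Uhat n) k i j = slice L (UU n) k i j" if "n < N" "i < I!n" "j < I'!n" for n i j
        using that unfolding Uhat_def slice_def by simp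
      show "is_svd (I ! n) (unfold_cols (dims_after I I' n) n)
          (\<lambda>i j. smm I (sl k A) (\<lambda>ka i s. cnj (slice L (Uhat ka) k s i)) 0 n (unfold_idx (dims_after I I' n) n i j))
          (slice L (UU n) k) (slice L (SS n) k) (slice L (VV n) k)" if n: "n < N" for n
        using tsY[OF n] unfolding tsvd_def slice_unfold sl_mmodes slice_tH by auto
    qed
    have zN: "S.z N = sl k Ahat"
      unfolding S.z_def S.y_def Ahat_def Shat_def sl_mmodes slice_tH ..
    have "nrm I (sl k (\<lambda>is. A is - Ahat is)) = (\<Sum>m<N. S.tlt m)"
      unfolding sl_diff using S.main_pyth zN by simp
    also have "\<dots> \<le> (\<Sum>n<N. G n k)"
    proof (rule sum_mono)
      fix n assume "n \<in> {..<N}"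
      hence n: "n < N" by simp
      show "S.tlt n \<le> G n k" unfolding G_def K_def
        using S.tlt_le[OF n, of "slice L (Uu n) k" "slice L (Ss n) k" "slice L (Vv n) k"] tsA[OF n]
        by (simp add: tsvd_def slice_unfold)
    qed
    finally show "nrm I (sl k (\<lambda>is. A is - Ahat is)) \<le> (\<Sum>n<N. G n k)" .
    fix n assume n: "n < N"
    have "G n k \<le> nrm I (\<lambda>is. sl k A is - smm I' (sl k S) (\<lambda>j. slice L (Ws j) k) 0 N is)"
      unfolding G_def K_def
    proof (rule eckart_tensor[OF n lI lI', where uA = "slice L (Uu n) k" and sA = "slice L (Ss n) k" and vA = "slice L (Vv n) k" and w = "\<lambda>j. slice L (Ws j) k"])
      show "is_svd (I ! n) (unfold_cols I n) (\<lambda>i j. sl k A (unfold_idx I n i j)) (slice L (Uu n) k) (slice L (Ss n) k) (slice L (Vv n) k)"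
        using tsA[OF n] by (simp add: tsvd_def slice_unfold)
      fix p q assume pq: "p < I'!n" "q < I'!n"
      have "slice L (tmatmul L (I ! n) (tH L (Ws n)) (Ws n)) k p q = slice L (tident L) k p q"
        using orthW[OF n] pq unfolding slice_def by simp
      thus "(\<Sum>l<I ! n. cnj (slice L (Ws n) k l p) * slice L (Ws n) k l q) = (if p = q then 1 else 0)"
        unfolding slice_tmatmul slice_tident slice_tH by simp
    qed
    also have "\<dots> = nrm I (sl k (\<lambda>is. A is - X is))"
      unfolding X_def sl_diff sl_mmodes ..
    finally show "G n k \<le> nrm I (sl k (\<lambda>is. A is - X is))" .
  qed
  have GT: "(\<Sum>k\<in>UNIV. G n k) = (cmod c)\<^sup>2 * T n" if n: "n < N" for n
  proof -
    have "(\<Sum>k\<in>UNIV. G n k) = (\<Sum>i\<in>{I'!n..<K n}. (norm (L *v Ss n i i))\<^sup>2)"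
      unfolding G_def norm_vec_sq slice_def by (rule sum.swap)
    also have "\<dots> = (cmod c)\<^sup>2 * (\<Sum>i\<in>{I'!n..<K n}. (norm (Ss n i i))\<^sup>2)"
      by (simp add: L_norm sum_distrib_left)
    also have "(\<Sum>i\<in>{I'!n..<K n}. (norm (Ss n i i))\<^sup>2) = T n"
    proof -
      have "{I'!n..<K n} = {I'!n..<R n} \<union> {R n..<K n}" using bnd[OF n] RK[OF n] by auto
      hence "(\<Sum>i\<in>{I'!n..<K n}. (norm (Ss n i i))\<^sup>2) = T n + (\<Sum>i\<in>{R n..<K n}. (norm (Ss n i i))\<^sup>2)"
        unfolding T_def by (simp add: sum.union_disjoint ivl_disj_int)
      also have "(\<Sum>i\<in>{R n..<K n}. (norm (Ss n i i))\<^sup>2) = 0"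
      proof (rule sum.neutral, rule ballI)
        fix i assume "i \<in> {R n..<K n}"
        hence "Ss n i i = 0" using trank_suffix(2)[OF tsA[OF n]] unfolding R_def K_def by auto
        thus "(norm (Ss n i i))\<^sup>2 = 0" by simp
      qed
      finally show ?thesis by simp
    qed
    finally show ?thesis .
  qed
  have cpos: "0 < (cmod c)\<^sup>2" using c0 by simp
  have part1: "(tnorm I (\<lambda>is. A is - Ahat is))\<^sup>2 \<le> (\<Sum>n<N. T n)"
  proof -
    have "(cmod c)\<^sup>2 * (tnorm I (\<lambda>is. A is - Ahat is))\<^sup>2 = (\<Sum>k\<in>UNIV. nrm I (sl k (\<lambda>is. A is - Ahat is)))"
      by (rule tnorm_sl)
    also have "\<dots> \<le> (\<Sum>k\<in>UNIV. \<Sum>n<N. G n k)" by (rule sum_mono) (rule key1)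
    also have "\<dots> = (\<Sum>n<N. \<Sum>k\<in>UNIV. G n k)" by (rule sum.swap)
    also have "\<dots> = (\<Sum>n<N. (cmod c)\<^sup>2 * T n)" by (rule sum.cong) (auto simp: GT)
    also have "\<dots> = (cmod c)\<^sup>2 * (\<Sum>n<N. T n)" by (simp add: sum_distrib_left)
    finally show ?thesis using cpos by simp
  qed
  have part2: "T n \<le> (tnorm I (\<lambda>is. A is - X is))\<^sup>2" if n: "n < N" for n
  proof -
    have "(cmod c)\<^sup>2 * T n = (\<Sum>k\<in>UNIV. G n k)" using GT[OF n] by simp
    also have "\<dots> \<le> (\<Sum>k\<in>UNIV. nrm I (sl k (\<lambda>is. A is - X is)))" by (rule sum_mono) (rule key2[OF n])
    also have "\<dots> = (cmod c)\<^sup>2 * (tnorm I (\<lambda>is. A is - X is))\<^sup>2" by (rule tnorm_sl[symmetric])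
    finally show ?thesis using cpos by simp
  qed
  have tn0: "0 \<le> tnorm D Y" for D Y unfolding tnorm_def by (simp add: sum_nonneg)
  show ?thesis
  proof
    have "tnorm I (\<lambda>is. A is - Ahat is) = sqrt ((tnorm I (\<lambda>is. A is - Ahat is))\<^sup>2)" using tn0[of I "\<lambda>is. A is - Ahat is"] by simp
    also have "\<dots> \<le> sqrt (\<Sum>n<N. T n)" using part1 by (rule real_sqrt_le_mono)
    finally show "tnorm I (\<lambda>is. A is - Ahat is) \<le> sqrt (\<Sum>n<N. \<Sum>i\<in>{I' ! n..<R n}. (norm (Ss n i i))\<^sup>2)"
      unfolding T_def .
    have "(\<Sum>n<N. T n) \<le> (\<Sum>n<N. (tnorm I (\<lambda>is. A is - X is))\<^sup>2)" by (rule sum_mono) (simp add: part2)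
    hence "sqrt (\<Sum>n<N. T n) \<le> sqrt (real N * (tnorm I (\<lambda>is. A is - X is))\<^sup>2)" by (simp add: real_sqrt_le_mono)
    also have "\<dots> = sqrt (real N) * tnorm I (\<lambda>is. A is - X is)" using tn0[of I "\<lambda>is. A is - X is"] by (simp add: real_sqrt_mult)
    finally show "sqrt (\<Sum>n<N. \<Sum>i\<in>{I' ! n..<R n}. (norm (Ss n i i))\<^sup>2)
           \<le> sqrt (real N) * tnorm I (\<lambda>is. A is - mmodes L I' S Ws N is)"
      unfolding T_def X_def .
  qed
qed


end
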